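(* Let $w$ be a perfectly clustering Lyndon word over a totally ordered alphabet. Then $w$ has a unique palindromic special factorization $w=a_1\pi_1a_2\pi_2\cdots\pi_{k-1}a_k$. Precisely: for every $i\in\{1,\dots,k\}$, the word $a_i\pi_ia_{i+1}\cdots\pi_{k-1}a_k$ is the lexicographically smallest suffix of $w$ beginning with $a_i$, and $a_i\pi_i\cdots\pi_{k-1}a_k\,a_1\pi_1\cdots a_{i-1}\pi_{i-1}$ is the lexicographically smallest conjugate of $w$ beginning with $a_i$.
   Context: A special factorization of $w$ is a factorization $w=a_1\pi_1a_2\cdots\pi_{k-1}a_k$ where the set of letters occurring in $w$ is $\{a_1<\cdots<a_k\}$ and $\pi_1,\dots,\pi_{k-1}$ are words; it is palindromic if every $\pi_i$ is a palindrome. Conjugates of $w$ are the words $yx$ where $w=xy$. Lexicographic order: a proper prefix is smaller. A Lyndon word is a primitive word strictly smaller than its other conjugates. For a primitive word $v$ of length $n$ with conjugates $v_1<\cdots<v_n$, $\mathrm{bw}(v)$ is the word formed by the last letters of $v_1,\dots,v_n$; $v$ is perfectly clustering if $\mathrm{bw}(v)$ is weakly decreasing. *)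

theory Defs
  imports Main "HOL-Library.List_Lexorder"
begin

(* Words are lists over a linearly ordered alphabet 'a; the order on words is the
   lexicographic order of HOL-Library.List_Lexorder (a proper prefix is smaller). *)

definition conjugates :: "'a list \<Rightarrow> 'a list set" where
  "conjugates w = {y @ x | x y. w = x @ y}"

definition primitive :: "'a list \<Rightarrow> bool" where
  "primitive w \<longleftrightarrow> w \<noteq> [] \<and> (\<forall>u k. concat (replicate k u) = w \<longrightarrow> k = 1)"

definition lyndon :: "'a::linorder list \<Rightarrow> bool" where
  "lyndon w \<longleftrightarrow> primitive w \<and> (\<forall>v \<in> conjugates w. v \<noteq> w \<longrightarrow> w < v)"

definition bw :: "'a::linorder list \<Rightarrow> 'a list" where
  "bw v = map last (sorted_list_of_set (conjugates v))"

definition perfectly_clustering :: "'a::linorder list \<Rightarrow> bool" where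
  "perfectly_clustering v \<longleftrightarrow> primitive v \<and> sorted_wrt (\<ge>) (bw v)"

fun sw :: "'a list \<Rightarrow> 'a list list \<Rightarrow> 'a list" where
  "sw [] _ = []"
| "sw [a] _ = [a]"
| "sw (a # b # as) [] = a # sw (b # as) []"
| "sw (a # b # as) (p # ps) = a # p @ sw (b # as) ps"

definition letters :: "'a::linorder list \<Rightarrow> 'a list" where
  "letters w = sorted_list_of_set (set w)"

definition special_factorization :: "'a::linorder list \<Rightarrow> 'a list list \<Rightarrow> bool" where
  "special_factorization w ps \<longleftrightarrow>
     length ps + 1 = length (letters w) \<and> w = sw (letters w) ps"

definition palindromic_special_factorization :: "'a::linorder list \<Rightarrow> 'a list list \<Rightarrow> bool" where
  "palindromic_special_factorization w ps \<longleftrightarrow>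
     special_factorization w ps \<and> (\<forall>p \<in> set ps. rev p = p)"

end

theory Submission
  imports Defs
begin


lemma lex_less_eq_len:
  fixes xs ys :: "'a::linorder list"
  assumes "length xs = length ys"
  shows "xs < ys \<longleftrightarrow> (\<exists>m<length xs. (\<forall>j<m. xs!j = ys!j) \<and> xs!m < ys!m)"
proof
  assume "xs < ys"
  then obtain i where i: "i < min (length xs) (length ys)" "take i xs = take i ys" "xs!i < ys!i"
    using assms unfolding list_less_def lexord_take_index_conv by auto
  have "\<forall>j<i. xs!j = ys!j"
    by (metis i(2) nth_take)
  then show "\<exists>m<length xs. (\<forall>j<m. xs!j = ys!j) \<and> xs!m < ys!m" using i by auto
next
  assume "\<exists>m<length xs. (\<forall>j<m. xs!j = ys!j) \<and> xs!m < ys!m"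
  then obtain m where m: "m < length xs" "\<forall>j<m. xs!j = ys!j" "xs!m < ys!m" by blast
  have "take m xs = take m ys"
    using m assms by (intro nth_take_lemma) auto
  then show "xs < ys" using m assms unfolding list_less_def lexord_take_index_conv by auto
qed

lemma less_append_same_len:
  fixes xs ys :: "'a::linorder list"
  assumes "length xs = length ys" "xs < ys"
  shows "xs @ us < ys @ vs"
proof -
  obtain m where m: "m < length xs" "\<forall>j<m. xs!j = ys!j" "xs!m < ys!m"
    using assms lex_less_eq_len by blast
  have "take m (xs@us) = take m (ys@vs)"
    using m assms by (simp add: nth_take_lemma nth_append)
  then show ?thesis using m assms unfolding list_less_def lexord_take_index_conv
    by (auto simp: nth_append)
qed

lemma snoc_less_iff:
  fixes xs ys :: "'a::linorder list"
  assumes "length xs = length ys"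
  shows "xs @ [a] < ys @ [a] \<longleftrightarrow> xs < ys"
proof
  assume h: "xs @ [a] < ys @ [a]"
  show "xs < ys"
  proof (rule ccontr)
    assume "\<not> xs < ys"
    then have "ys < xs \<or> xs = ys" by auto
    then show False
    proof
      assume "ys < xs"
      then have "ys @ [a] < xs @ [a]" using assms less_append_same_len by metis
      then show False using h by auto
    next
      assume "xs = ys" then show False using h by auto
    qed
  qed
next
  assume "xs < ys" then show "xs @ [a] < ys @ [a]" using assms less_append_same_len by metis
qed

locale pcl =
  fixes w :: "'a::linorder list"
  assumes lyn: "lyndon w" and pcw: "perfectly_clustering w"
begin

abbreviation "n \<equiv> length w"

definition rot :: "nat \<Rightarrow> 'a list" where "rot q = rotate q w"

lemma prim: "primitive w" using lyn unfolding lyndon_def by auto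

lemma n_pos: "0 < n" using prim unfolding primitive_def by auto

lemma len_rot[simp]: "length (rot q) = n" by (simp add: rot_def)

lemma rot_nth: "j < n \<Longrightarrow> rot q ! j = w ! ((q + j) mod n)"
  by (simp add: rot_def nth_rotate)

lemma rot0[simp]: "rot 0 = w" by (simp add: rot_def)

lemma rot_mod: "rot (q mod n) = rot q"
  by (metis rot_def rotate_conv_mod)

lemma rot_drop_take: "q < n \<Longrightarrow> rot q = drop q w @ take q w"
  by (simp add: rot_def rotate_drop_take)

lemma rot_inj: assumes "q < n" "q' < n" "rot q = rot q'" shows "q = q'"
proof (rule ccontr)
  assume ne: "q \<noteq> q'"
  have key: "\<And>a b. a < n \<Longrightarrow> b < n \<Longrightarrow> a < b \<Longrightarrow> rot a = rot b \<Longrightarrow> False"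
  proof -
    fix a b assume ab: "a < n" "b < n" "a < b" "rot a = rot b"
    define d where "d = n - b + a"
    have d: "0 < d" "d < n" using ab by (auto simp: d_def)
    have "rotate (n - b) (rot a) = rotate d w" by (simp add: rot_def rotate_rotate d_def add.commute)
    moreover have "rotate (n - b) (rot b) = w"
      using ab by (simp add: rot_def rotate_rotate)
    ultimately have eq: "rotate d w = w" using ab by simp
    have "drop d w @ take d w = take d w @ drop d w"
      using eq d by (metis append_take_drop_id mod_less rotate_drop_take)
    moreover have "drop d w \<noteq> []" "take d w \<noteq> []" using d by auto
    ultimately obtain k zs where "k > 1" "concat (replicate k zs) = drop d w @ take d w"
      using comm_append_is_replicate by metis
    then have "concat (replicate k zs) = w" using eq d by (metis append_take_drop_id mod_less rotate_drop_take)
    then show False using prim \<open>k > 1\<close> unfolding primitive_def by auto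
  qed
  show False
    using assms ne key by (metis linorder_neqE_nat)
qed

lemma conj_eq: "conjugates w = rot ` {..<n}"
proof
  show "conjugates w \<subseteq> rot ` {..<n}"
  proof
    fix v assume "v \<in> conjugates w"
    then obtain x y where xy: "w = x @ y" "v = y @ x" unfolding conjugates_def by auto
    show "v \<in> rot ` {..<n}"
    proof (cases "length x < n")
      case True
      have "rot (length x) = drop (length x) w @ take (length x) w" using True by (simp add: rot_drop_take)
      also have "\<dots> = v" using xy by simp
      finally have "rot (length x) = v" .
      then show ?thesis using True by force
    next
      case False
      then have "y = []" using xy by simp
      then have "v = w" using xy by simp
      then have "v = rot 0" by simp
      then show ?thesis using n_pos by force
    qed
  qed
next
  show "rot ` {..<n} \<subseteq> conjugates w"
  proof
    fix v assume "v \<in> rot ` {..<n}"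
    then obtain q where q: "q < n" "v = rot q" by auto
    then have "w = take q w @ drop q w" "v = drop q w @ take q w" by (auto simp: rot_drop_take)
    then show "v \<in> conjugates w" unfolding conjugates_def by blast
  qed
qed

lemma rot_in_conj: "q < n \<Longrightarrow> rot q \<in> conjugates w"
  using conj_eq by auto

lemma lyn_min: assumes "q < n" shows "w \<le> rot q"
proof (cases "q = 0")
  case True then show ?thesis by simp
next
  case False
  then have "rot q \<noteq> w" using rot_inj[of q 0] assms n_pos by auto
  then show ?thesis using lyn assms rot_in_conj unfolding lyndon_def by auto
qed

definition nx :: "nat \<Rightarrow> nat" where "nx q = Suc q mod n"
definition pv :: "nat \<Rightarrow> nat" where "pv q = (q + n - 1) mod n"

lemma nx_lt: "nx q < n" using n_pos by (simp add: nx_def)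
lemma pv_lt: "pv q < n" using n_pos by (simp add: pv_def)
lemma nx_pv: "q < n \<Longrightarrow> nx (pv q) = q"
proof -
  assume q: "q < n"
  have "nx (pv q) = Suc ((q + n - 1) mod n) mod n" by (simp add: nx_def pv_def)
  also have "\<dots> = Suc (q + n - 1) mod n" by (simp add: mod_Suc_eq)
  also have "Suc (q + n - 1) = q + n" using n_pos by simp
  finally show ?thesis using q by simp
qed
lemma pv_nx: "q < n \<Longrightarrow> pv (nx q) = q"
proof -
  assume q: "q < n"
  show ?thesis
  proof (cases "Suc q < n")
    case True
    then have "pv (nx q) = (Suc q + n - 1) mod n" by (simp add: nx_def pv_def)
    also have "Suc q + n - 1 = q + n" by simp
    finally show ?thesis using q by simp
  next
    case False
    then have "Suc q = n" using q by simp
    then have "nx q = 0" by (simp add: nx_def)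
    then show ?thesis using \<open>Suc q = n\<close> by (simp add: pv_def)
  qed
qed
lemma nx_inj: "q < n \<Longrightarrow> q' < n \<Longrightarrow> nx q = nx q' \<Longrightarrow> q = q'"
  by (metis pv_nx)
lemma nx_Suc: "Suc q < n \<Longrightarrow> nx q = Suc q" by (simp add: nx_def)
lemma pv_Suc: "q < n \<Longrightarrow> pv (Suc q) = q"
  unfolding pv_def by simp

lemma rot_nx: "rot (nx q) = rotate1 (rot q)"
  by (metis nx_def rot_def rot_mod rotate_Suc)

lemma last_rot: "q < n \<Longrightarrow> last (rot q) = w ! pv q"
proof -
  assume q: "q < n"
  have "last (rot q) = rot q ! (n - 1)" using n_pos
    by (metis last_conv_nth len_rot list.size(3) not_less0)
  also have "\<dots> = w ! ((q + (n - 1)) mod n)" using n_pos by (simp add: rot_nth)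
  finally show ?thesis using n_pos by (simp add: pv_def)
qed

lemma hd_rot: "q < n \<Longrightarrow> rot q ! 0 = w ! q"
  using n_pos by (simp add: rot_nth)

lemma rot_Cons: "q < n \<Longrightarrow> \<exists>xs. rot q = w!q # xs \<and> rot (nx q) = xs @ [w!q]"
proof -
  assume q: "q < n"
  obtain x xs where "rot q = x # xs" using n_pos
    by (metis len_rot length_0_conv neq_Nil_conv not_less0)
  moreover have "x = w!q" using hd_rot[OF q] calculation by simp
  ultimately show ?thesis by (simp add: rot_nx)
qed

lemma LF: assumes "u < n" "v < n" "w!u = w!v"
  shows "rot u < rot v \<longleftrightarrow> rot (nx u) < rot (nx v)"
proof -
  obtain xs where xs: "rot u = w!u # xs" "rot (nx u) = xs @ [w!u]" using rot_Cons assms by blast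
  obtain ys where ys: "rot v = w!v # ys" "rot (nx v) = ys @ [w!v]" using rot_Cons assms by blast
  have "length xs = length ys" using xs ys len_rot by (metis length_Cons nat.inject)
  then show ?thesis using xs ys assms(3) by (simp add: snoc_less_iff)
qed

lemma PC: assumes "u < n" "v < n" "rot u < rot v" shows "w ! pv v \<le> w ! pv u"
proof -
  let ?S = "sorted_list_of_set (conjugates w)"
  have fin: "finite (conjugates w)" using conj_eq by simp
  have sw: "sorted_wrt (\<ge>) (map last ?S)" using pcw unfolding perfectly_clustering_def bw_def by auto
  have ss: "sorted_wrt (<) ?S" using fin by simp
  obtain i where i: "i < length ?S" "?S ! i = rot u"
    using rot_in_conj[OF assms(1)] fin by (metis in_set_conv_nth set_sorted_list_of_set)
  obtain j where j: "j < length ?S" "?S ! j = rot v"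
    using rot_in_conj[OF assms(2)] fin by (metis in_set_conv_nth set_sorted_list_of_set)
  have "i < j"
  proof (rule ccontr)
    assume "\<not> i < j"
    then have "j < i \<or> j = i" by auto
    then show False
    proof
      assume "j < i" then have "?S!j < ?S!i" using sorted_wrt_nth_less[OF ss, of j i] i by simp
      then show False using i j assms(3) by auto
    next
      assume "j = i" then show False using i j assms(3) by auto
    qed
  qed
  then have "last (?S!j) \<le> last (?S!i)"
    using sorted_wrt_nth_less[OF sw, of i j] i j by simp
  then show ?thesis using i j last_rot[OF assms(1)] last_rot[OF assms(2)] by simp
qed

end


context pcl
begin

definition rk :: "nat \<Rightarrow> nat" where "rk q = card {y. y < n \<and> rot y < rot q}"

lemma rk_lt: assumes "q < n" shows "rk q < n"
proof -
  have "{y. y < n \<and> rot y < rot q} \<subseteq> {..<n} - {q}" by auto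
  then have "rk q \<le> card ({..<n} - {q})" unfolding rk_def by (intro card_mono) auto
  also have "\<dots> = n - 1" using assms by simp
  finally show ?thesis using n_pos by linarith
qed

lemma rk_mono: assumes "q < n" "q' < n" "rot q < rot q'" shows "rk q < rk q'"
proof -
  have "{y. y < n \<and> rot y < rot q} \<subset> {y. y < n \<and> rot y < rot q'}"
    using assms by auto
  then show ?thesis unfolding rk_def by (intro psubset_card_mono) auto
qed

lemma rk_less_iff: assumes "q < n" "q' < n" shows "rk q < rk q' \<longleftrightarrow> rot q < rot q'"
proof
  assume h: "rk q < rk q'"
  show "rot q < rot q'"
  proof (rule ccontr)
    assume "\<not> rot q < rot q'"
    then have "rot q' < rot q \<or> rot q' = rot q" by auto
    then show False
    proof
      assume "rot q' < rot q" then show False using rk_mono assms h by fastforce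
    next
      assume "rot q' = rot q" then have "q = q'" using rot_inj assms by auto
      then show False using h by simp
    qed
  qed
next
  assume "rot q < rot q'" then show "rk q < rk q'" using rk_mono assms by auto
qed

lemma rk_le_iff: assumes "q < n" "q' < n" shows "rk q \<le> rk q' \<longleftrightarrow> rot q \<le> rot q'"
  using rk_less_iff[OF assms(2) assms(1)] by (simp add: not_less[symmetric])

lemma rk_inj: assumes "q < n" "q' < n" "rk q = rk q'" shows "q = q'"
proof -
  have "\<not> rot q < rot q'" using rk_less_iff[OF assms(1,2)] assms(3) by simp
  moreover have "\<not> rot q' < rot q" using rk_less_iff[OF assms(2,1)] assms(3) by simp
  ultimately have "rot q = rot q'" by auto
  then show ?thesis using rot_inj assms by auto
qed

lemma rk_bij: "bij_betw rk {..<n} {..<n}"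
proof -
  have inj: "inj_on rk {..<n}" using rk_inj by (auto simp: inj_on_def)
  have sub: "rk ` {..<n} \<subseteq> {..<n}" using rk_lt by auto
  have "card (rk ` {..<n}) = n" using inj by (simp add: card_image)
  then have "rk ` {..<n} = {..<n}" using sub by (intro card_subset_eq) auto
  then show ?thesis using inj by (simp add: bij_betw_def)
qed

lemma rk_surj: "r < n \<Longrightarrow> \<exists>q<n. rk q = r"
  using rk_bij unfolding bij_betw_def by (metis imageE lessThan_iff)

definition pos :: "nat \<Rightarrow> nat" where "pos r = (THE q. q < n \<and> rk q = r)"

lemma pos: assumes "r < n" shows "pos r < n" "rk (pos r) = r"
proof -
  obtain q where q: "q < n" "rk q = r" using rk_surj assms by blast
  have "pos r = q" unfolding pos_def using q rk_inj by blast
  then show "pos r < n" "rk (pos r) = r" using q by auto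
qed

lemma pos_rk: "q < n \<Longrightarrow> pos (rk q) = q"
  using pos[of "rk q"] rk_lt rk_inj by metis

lemma pos_eqI: "q < n \<Longrightarrow> rk q = r \<Longrightarrow> pos r = q"
  using pos_rk by blast

lemma rk0: "rk 0 = 0"
proof -
  have "{y. y < n \<and> rot y < rot 0} = {}"
    using lyn_min by (auto simp: not_less[symmetric])
  then show ?thesis by (simp add: rk_def)
qed

definition lt :: "'a \<Rightarrow> nat" where "lt a = card {y. y < n \<and> w!y < a}"
definition cn :: "'a \<Rightarrow> nat" where "cn a = card {y. y < n \<and> w!y = a}"
definition gt :: "'a \<Rightarrow> nat" where "gt a = card {y. y < n \<and> a < w!y}"

lemma fin_col[simp]: "finite {y. y < n \<and> P y}" by simp

lemma cnt_sum: "lt a + cn a + gt a = n"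
proof -
  have "{y. y < n \<and> w!y < a} \<union> {y. y < n \<and> w!y = a} \<union> {y. y < n \<and> a < w!y} = {..<n}"
    by auto
  moreover have "card ({y. y < n \<and> w!y < a} \<union> {y. y < n \<and> w!y = a} \<union> {y. y < n \<and> a < w!y})
     = lt a + cn a + gt a"
    unfolding lt_def cn_def gt_def
    by (subst card_Un_disjoint, simp, simp, force, subst card_Un_disjoint, auto)
  ultimately show ?thesis by simp
qed

lemma cn_pos: "a \<in> set w \<Longrightarrow> 0 < cn a"
proof -
  assume "a \<in> set w"
  then obtain y where "y < n" "w!y = a" by (metis in_set_conv_nth)
  then have "{y. y < n \<and> w!y = a} \<noteq> {}" by auto
  then show ?thesis unfolding cn_def by (simp add: card_gt_0_iff)
qed

lemma rot_first_less: "u < n \<Longrightarrow> v < n \<Longrightarrow> w!u < w!v \<Longrightarrow> rot u < rot v"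
  using lex_less_eq_len[of "rot u" "rot v"] hd_rot n_pos by auto

lemma F2: assumes "y < n" shows "lt (w!y) \<le> rk y" "rk y < lt (w!y) + cn (w!y)"
proof -
  let ?a = "w!y"
  have "{u. u < n \<and> w!u < ?a} \<subseteq> {u. u < n \<and> rot u < rot y}"
    using rot_first_less assms by auto
  then show "lt ?a \<le> rk y" unfolding lt_def rk_def by (intro card_mono) auto
  have "{u. u < n \<and> rot u < rot y} \<subseteq> {u. u < n \<and> w!u < ?a} \<union> ({u. u < n \<and> w!u = ?a} - {y})"
  proof
    fix u assume u: "u \<in> {u. u < n \<and> rot u < rot y}"
    then have "\<not> ?a < w!u" using rot_first_less assms by fastforce
    moreover have "u \<noteq> y" using u by auto
    ultimately show "u \<in> {u. u < n \<and> w!u < ?a} \<union> ({u. u < n \<and> w!u = ?a} - {y})"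
      using u by auto
  qed
  then have "rk y \<le> card ({u. u < n \<and> w!u < ?a} \<union> ({u. u < n \<and> w!u = ?a} - {y}))"
    unfolding rk_def by (intro card_mono) auto
  also have "\<dots> = lt ?a + (cn ?a - 1)"
    unfolding lt_def cn_def using assms by (subst card_Un_disjoint) auto
  moreover have "0 < cn ?a" using cn_pos[of ?a] assms by simp
  ultimately show "rk y < lt ?a + cn ?a" by linarith
qed

lemma nx_image: "{y. y < n \<and> P (w ! pv y)} = nx ` {u. u < n \<and> P (w!u)}"
proof
  show "{y. y < n \<and> P (w ! pv y)} \<subseteq> nx ` {u. u < n \<and> P (w!u)}"
  proof
    fix y assume "y \<in> {y. y < n \<and> P (w ! pv y)}"
    then show "y \<in> nx ` {u. u < n \<and> P (w!u)}"
      using nx_pv pv_lt by (metis (mono_tags, lifting) image_iff mem_Collect_eq)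
  qed
next
  show "nx ` {u. u < n \<and> P (w!u)} \<subseteq> {y. y < n \<and> P (w ! pv y)}"
    using nx_lt pv_nx by auto
qed

lemma card_nx: "S \<subseteq> {..<n} \<Longrightarrow> card (nx ` S) = card S"
  by (intro card_image) (auto simp: inj_on_def intro: nx_inj)

lemma F4: assumes "y < n" shows "rk (nx y) + lt (w!y) = rk y + gt (w!y)"
proof -
  let ?a = "w!y"
  have pvy: "pv (nx y) = y" using pv_nx assms by simp
  define A where "A = {u. u < n \<and> ?a < w ! pv u}"
  define B where "B = {u. u < n \<and> w ! pv u = ?a \<and> rot u < rot (nx y)}"
  have split: "{u. u < n \<and> rot u < rot (nx y)} = A \<union> B"
  proof
    show "{u. u < n \<and> rot u < rot (nx y)} \<subseteq> A \<union> B"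
    proof
      fix u assume u: "u \<in> {u. u < n \<and> rot u < rot (nx y)}"
      then have "w ! pv (nx y) \<le> w ! pv u" using PC nx_lt by auto
      then show "u \<in> A \<union> B" using u pvy unfolding A_def B_def by auto
    qed
  next
    show "A \<union> B \<subseteq> {u. u < n \<and> rot u < rot (nx y)}"
    proof
      fix u assume u: "u \<in> A \<union> B"
      show "u \<in> {u. u < n \<and> rot u < rot (nx y)}"
      proof (cases "u \<in> B")
        case True then show ?thesis unfolding B_def by auto
      next
        case False
        then have uA: "u < n" "?a < w ! pv u" using u unfolding A_def by auto
        have "\<not> rot (nx y) < rot u" using PC[of "nx y" u] nx_lt uA pvy by auto
        moreover have "rot (nx y) \<noteq> rot u"
        proof
          assume "rot (nx y) = rot u"
          then have "nx y = u" using rot_inj nx_lt uA by blast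
          then show False using uA pvy by auto
        qed
        ultimately show ?thesis using uA by auto
      qed
    qed
  qed
  have disj: "A \<inter> B = {}" unfolding A_def B_def by auto
  have cA: "card A = gt ?a"
    unfolding A_def gt_def by (subst nx_image) (rule card_nx, auto)
  have "B = nx ` {u. u < n \<and> w!u = ?a \<and> rot u < rot y}"
  proof
    show "B \<subseteq> nx ` {u. u < n \<and> w!u = ?a \<and> rot u < rot y}"
    proof
      fix u assume u: "u \<in> B"
      then have "u < n" "w ! pv u = ?a" "rot (nx (pv u)) < rot (nx y)" using nx_pv unfolding B_def by auto
      then have "rot (pv u) < rot y" using LF[of "pv u" y] pv_lt assms by auto
      then show "u \<in> nx ` {u. u < n \<and> w!u = ?a \<and> rot u < rot y}"
        using \<open>u < n\<close> \<open>w ! pv u = ?a\<close> nx_pv pv_lt by (metis (mono_tags, lifting) image_iff mem_Collect_eq)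
    qed
  next
    show "nx ` {u. u < n \<and> w!u = ?a \<and> rot u < rot y} \<subseteq> B"
    proof
      fix x assume "x \<in> nx ` {u. u < n \<and> w!u = ?a \<and> rot u < rot y}"
      then obtain u where u: "u < n" "w!u = ?a" "rot u < rot y" "x = nx u" by auto
      then have "rot (nx u) < rot (nx y)" using LF assms by auto
      then show "x \<in> B" unfolding B_def using u nx_lt pv_nx by auto
    qed
  qed
  then have cB: "card B = card {u. u < n \<and> w!u = ?a \<and> rot u < rot y}"
    by (simp add: card_nx subset_eq)
  have seq: "{u. u < n \<and> rot u < rot y} = {u. u < n \<and> w!u < ?a} \<union> {u. u < n \<and> w!u = ?a \<and> rot u < rot y}"
  proof -
    have "\<And>u. u < n \<Longrightarrow> w!u < ?a \<Longrightarrow> rot u < rot y" using rot_first_less assms by auto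
    moreover have "\<And>u. u < n \<Longrightarrow> rot u < rot y \<Longrightarrow> \<not> ?a < w!u"
      using rot_first_less assms by fastforce
    ultimately show ?thesis by fastforce
  qed
  have "rk y = card ({u. u < n \<and> w!u < ?a} \<union> {u. u < n \<and> w!u = ?a \<and> rot u < rot y})"
    unfolding rk_def seq ..
  then have "rk y = lt ?a + card {u. u < n \<and> w!u = ?a \<and> rot u < rot y}"
    unfolding lt_def by (subst (asm) card_Un_disjoint) auto
  moreover have "rk (nx y) = card A + card B"
    unfolding rk_def split using disj by (subst card_Un_disjoint) (auto simp: A_def B_def)
  ultimately show ?thesis using cA cB by simp
qed

lemma F3: assumes "y < n" shows "gt (w ! pv y) \<le> rk y" "rk y < gt (w ! pv y) + cn (w ! pv y)"
proof -
  have 1: "rk (nx (pv y)) + lt (w!pv y) = rk (pv y) + gt (w!pv y)" using F4 pv_lt by blast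
  have 2: "lt (w!pv y) \<le> rk (pv y)" "rk (pv y) < lt (w!pv y) + cn (w!pv y)" using F2 pv_lt by auto
  have 3: "nx (pv y) = y" using nx_pv assms by simp
  show "gt (w ! pv y) \<le> rk y" using 1[unfolded 3] 2 by linarith
  show "rk y < gt (w ! pv y) + cn (w ! pv y)" using 1[unfolded 3] 2 by linarith
qed

lemma lt_mono: "a < b \<Longrightarrow> lt a + cn a \<le> lt b"
proof -
  assume ab: "a < b"
  have "{y. y < n \<and> w!y < a} \<union> {y. y < n \<and> w!y = a} \<subseteq> {y. y < n \<and> w!y < b}" using ab by auto
  then have "card ({y. y < n \<and> w!y < a} \<union> {y. y < n \<and> w!y = a}) \<le> lt b"
    unfolding lt_def by (intro card_mono) auto
  then show ?thesis unfolding lt_def cn_def by (subst (asm) card_Un_disjoint) auto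
qed

lemma gt_mono: "a < b \<Longrightarrow> gt b + cn b \<le> gt a"
proof -
  assume ab: "a < b"
  have "{y. y < n \<and> b < w!y} \<union> {y. y < n \<and> w!y = b} \<subseteq> {y. y < n \<and> a < w!y}" using ab by auto
  then have "card ({y. y < n \<and> b < w!y} \<union> {y. y < n \<and> w!y = b}) \<le> gt a"
    unfolding gt_def by (intro card_mono) auto
  then show ?thesis unfolding gt_def cn_def by (subst (asm) card_Un_disjoint) auto
qed

lemma S_uniq: "lt a \<le> r \<Longrightarrow> r < lt a + cn a \<Longrightarrow> lt b \<le> r \<Longrightarrow> r < lt b + cn b \<Longrightarrow> a = b"
  using lt_mono by (metis leD le_trans linorder_neqE not_less)

lemma E_uniq: "gt a \<le> r \<Longrightarrow> r < gt a + cn a \<Longrightarrow> gt b \<le> r \<Longrightarrow> r < gt b + cn b \<Longrightarrow> a = b"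
  using gt_mono by (metis leD le_trans linorder_neqE not_less)

end


context pcl
begin

abbreviation "L \<equiv> letters w"
abbreviation "k \<equiv> length (letters w)"

lemma L_sorted: "sorted_wrt (<) L" by (simp add: letters_def)
lemma L_set: "set L = set w" by (simp add: letters_def)
lemma L_distinct: "distinct L" by (simp add: letters_def)

lemma k_pos: "0 < k"
proof -
  have "set w \<noteq> {}" using n_pos by auto
  then have "set L \<noteq> {}" using L_set by simp
  then show ?thesis by simp
qed

lemma L_less_iff: "i < k \<Longrightarrow> j < k \<Longrightarrow> L!i < L!j \<longleftrightarrow> i < j"
proof
  assume ij: "i < k" "j < k" "L!i < L!j"
  show "i < j"
  proof (rule ccontr)
    assume "\<not> i < j"
    then have "j < i \<or> j = i" by auto
    then show False
    proof
      assume "j < i" then have "L!j < L!i" using sorted_wrt_nth_less[OF L_sorted] ij by simp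
      then show False using ij by simp
    qed (use ij in simp)
  qed
next
  assume "i < k" "j < k" "i < j"
  then show "L!i < L!j" using sorted_wrt_nth_less[OF L_sorted] by simp
qed

lemma L_eq_iff: "i < k \<Longrightarrow> j < k \<Longrightarrow> L!i = L!j \<longleftrightarrow> i = j"
  using L_distinct by (simp add: nth_eq_iff_index_eq)

lemma letter_idx: "b \<in> set w \<Longrightarrow> \<exists>i<k. b = L!i"
  using L_set by (metis in_set_conv_nth)

lemma w_idx: "y < n \<Longrightarrow> \<exists>i<k. w!y = L!i"
  using letter_idx by simp

lemma L_in: "i < k \<Longrightarrow> L!i \<in> set w"
  using L_set nth_mem by metis

lemma lt_next: assumes "Suc i < k" shows "lt (L!Suc i) = lt (L!i) + cn (L!i)"
proof -
  have "{y. y < n \<and> w!y < L!Suc i} = {y. y < n \<and> w!y < L!i} \<union> {y. y < n \<and> w!y = L!i}"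
  proof (intro set_eqI iffI)
    fix y assume "y \<in> {y. y < n \<and> w!y < L!Suc i}"
    then have y: "y < n" "w!y < L!Suc i" by auto
    obtain j0 where j0: "j0 < k" "w!y = L!j0" using w_idx y(1) by blast
    then have j: "j0 < k" "w!y = L!j0" "y < n" "L!j0 < L!Suc i" using y by auto
    define j where "j = j0"
    note j = j[folded j_def]
    then have "j < Suc i" using L_less_iff assms by simp
    then have "j < i \<or> j = i" by auto
    then show "y \<in> {y. y < n \<and> w!y < L!i} \<union> {y. y < n \<and> w!y = L!i}"
      using j L_less_iff assms by auto
  next
    fix y assume "y \<in> {y. y < n \<and> w!y < L!i} \<union> {y. y < n \<and> w!y = L!i}"
    moreover have "L!i < L!Suc i" using L_less_iff assms by simp
    ultimately show "y \<in> {y. y < n \<and> w!y < L!Suc i}" by auto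
  qed
  moreover have "card ({y. y < n \<and> w!y < L!i} \<union> {y. y < n \<and> w!y = L!i}) =
     card {y. y < n \<and> w!y < L!i} + card {y. y < n \<and> w!y = L!i}"
    by (rule card_Un_disjoint) auto
  ultimately show ?thesis unfolding lt_def cn_def by simp
qed

lemma lt_first: "lt (L!0) = 0"
proof -
  have "{y. y < n \<and> w!y < L!0} = {}"
  proof -
    { fix y assume y: "y < n" "w!y < L!0"
      then obtain j where "j < k" "w!y = L!j" using w_idx by auto
      then have False using y L_less_iff k_pos by auto }
    then show ?thesis by auto
  qed
  then show ?thesis by (simp add: lt_def)
qed

lemma gt_last: "gt (L!(k-1)) = 0"
proof -
  have "{y. y < n \<and> L!(k-1) < w!y} = {}"
  proof -
    { fix y assume y: "y < n" "L!(k-1) < w!y"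
      then obtain j where "j < k" "w!y = L!j" using w_idx by auto
      then have False using y L_less_iff k_pos by auto }
    then show ?thesis by auto
  qed
  then show ?thesis by (simp add: gt_def)
qed

lemma cnL_pos: "i < k \<Longrightarrow> 0 < cn (L!i)" using cn_pos L_in by blast

definition pp :: "nat \<Rightarrow> nat" where "pp i = pos (lt (L!i))"

lemma lt_lt_n: "i < k \<Longrightarrow> lt (L!i) < n"
  using cnt_sum[of "L!i"] cnL_pos[of i] by linarith

lemma pp_lt: "i < k \<Longrightarrow> pp i < n" using pos lt_lt_n by (simp add: pp_def)
lemma rk_pp: "i < k \<Longrightarrow> rk (pp i) = lt (L!i)" using pos lt_lt_n by (simp add: pp_def)

lemma w_pp: assumes "i < k" shows "w ! pp i = L!i"
proof -
  have "lt (w!pp i) \<le> rk (pp i)" "rk (pp i) < lt (w!pp i) + cn (w!pp i)" using F2 pp_lt assms by auto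
  moreover have "lt (L!i) \<le> rk (pp i)" "rk (pp i) < lt (L!i) + cn (L!i)" using rk_pp cnL_pos assms by auto
  ultimately show ?thesis using S_uniq by blast
qed

lemma pp_inj: "i < k \<Longrightarrow> j < k \<Longrightarrow> pp i = pp j \<Longrightarrow> i = j"
  using w_pp L_eq_iff by metis

lemma isP: assumes "q < n" shows "rk q = lt (w!q) \<longleftrightarrow> (\<exists>i<k. q = pp i)"
proof
  assume h: "rk q = lt (w!q)"
  obtain i where i: "i < k" "w!q = L!i" using w_idx assms by blast
  then have "q = pp i" using h rk_pp pp_lt rk_inj assms by metis
  then show "\<exists>i<k. q = pp i" using i by blast
next
  assume "\<exists>i<k. q = pp i"
  then show "rk q = lt (w!q)" using rk_pp w_pp by auto
qed

lemma pp0: "pp 0 = 0"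
  using rk_pp[of 0] k_pos lt_first rk0 pp_lt rk_inj n_pos by metis

lemma ppk: "pp (k-1) = n - 1"
proof -
  let ?y = "n - 1"
  have y: "?y < n" using n_pos by simp
  have "nx ?y = 0" using n_pos by (simp add: nx_def)
  then have e: "lt (w!?y) = rk ?y + gt (w!?y)" using F4[OF y] rk0 by simp
  have "lt (w!?y) \<le> rk ?y" using F2 y by simp
  then have g0: "gt (w!?y) = 0" and r: "rk ?y = lt (w!?y)" using e by linarith+
  obtain j where j: "j < k" "w!?y = L!j" using w_idx y by blast
  have "j = k - 1"
  proof (rule ccontr)
    assume "j \<noteq> k - 1"
    then have "j < k - 1" using j by simp
    then have "L!j < L!(k-1)" using L_less_iff j by simp
    then have "gt (L!(k-1)) + cn (L!(k-1)) \<le> gt (L!j)" using gt_mono by blast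
    then show False using g0 j cnL_pos[of "k-1"] k_pos by simp
  qed
  then have "rk ?y = rk (pp (k-1))" using r j rk_pp k_pos by simp
  then show ?thesis using rk_inj y pp_lt k_pos by (metis diff_less zero_less_one)
qed

lemma pv_alt: "pv x = (x + (n - 1)) mod n"
proof -
  have e: "x + n - 1 = x + (n - 1)" using n_pos by linarith
  show ?thesis unfolding pv_def e ..
qed

definition tt :: nat where "tt = pos (n - 1)"

lemma tt: "tt < n" "rk tt = n - 1" using pos n_pos by (auto simp: tt_def)

lemma refl_letter_of:
  assumes q: "q < n" and h: "rk ((tt + n - q) mod n) = n - 1 - rk q"
  shows "w ! ((tt + 2*n - 1 - q) mod n) = w ! q"
proof -
  let ?h = "(tt + n - q) mod n"
  have hn: "?h < n" using n_pos by simp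
  have pvh: "pv ?h = (tt + 2*n - 1 - q) mod n"
  proof -
    have "pv ?h = ((tt + n - q) mod n + (n - 1)) mod n" by (rule pv_alt)
    also have "\<dots> = (tt + n - q + (n - 1)) mod n" by (simp add: mod_add_left_eq)
    also have "tt + n - q + (n - 1) = tt + 2*n - 1 - q" using q n_pos by simp
    finally show ?thesis .
  qed
  let ?a = "w!q"
  have "lt ?a \<le> rk q" "rk q < lt ?a + cn ?a" using F2 q by auto
  then have 1: "gt ?a \<le> rk ?h" "rk ?h < gt ?a + cn ?a" using h cnt_sum[of ?a] by linarith+
  have 2: "gt (w ! pv ?h) \<le> rk ?h" "rk ?h < gt (w ! pv ?h) + cn (w ! pv ?h)" using F3 hn by auto
  have "w ! pv ?h = ?a" using E_uniq 1 2 by blast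
  then show ?thesis using pvh by simp
qed

lemma refl_rk: "q < n \<Longrightarrow> rk ((tt + n - q) mod n) = n - 1 - rk q"
proof (induction q)
  case 0
  then show ?case using tt rk0 by simp
next
  case (Suc q)
  then have q: "q < n" by simp
  let ?h = "(tt + n - q) mod n"
  have IH: "rk ?h = n - 1 - rk q" using Suc q by simp
  have hn: "?h < n" using n_pos by simp
  let ?a = "w!q"
  have Rs: "(tt + n - Suc q) mod n = pv ?h"
  proof -
    have "pv ?h = ((tt + n - q) mod n + (n - 1)) mod n" by (rule pv_alt)
    also have "\<dots> = (tt + n - q + (n - 1)) mod n" by (simp add: mod_add_left_eq)
    also have "tt + n - q + (n - 1) = (tt + n - Suc q) + n" using Suc.prems n_pos by simp
    finally show ?thesis by simp
  qed
  have wx: "w ! pv ?h = ?a"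
  proof -
    have "w ! ((tt + 2*n - 1 - q) mod n) = ?a" using refl_letter_of q IH by blast
    moreover have "pv ?h = (tt + 2*n - 1 - q) mod n"
    proof -
      have "pv ?h = ((tt + n - q) mod n + (n - 1)) mod n" by (rule pv_alt)
      also have "\<dots> = (tt + n - q + (n - 1)) mod n" by (simp add: mod_add_left_eq)
      also have "tt + n - q + (n - 1) = tt + 2*n - 1 - q" using q n_pos by simp
      finally show ?thesis .
    qed
    ultimately show ?thesis by simp
  qed
  have F4x: "rk (nx (pv ?h)) + lt ?a = rk (pv ?h) + gt ?a" using F4[of "pv ?h"] pv_lt wx by simp
  have "nx (pv ?h) = ?h" using nx_pv hn by simp
  then have A: "rk ?h + lt ?a = rk (pv ?h) + gt ?a" using F4x by simp
  have B: "rk (Suc q) + lt ?a = rk q + gt ?a" using F4[OF q] nx_Suc[OF Suc.prems] by simp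
  have C: "rk q < n" "rk (Suc q) < n" using rk_lt q Suc.prems by auto
  have "rk (pv ?h) = n - 1 - rk (Suc q)" using A B C IH by linarith
  then show ?case using Rs by simp
qed

lemma refl_w: "q < n \<Longrightarrow> w ! ((tt + 2*n - 1 - q) mod n) = w ! q"
  using refl_letter_of refl_rk by blast

end


context pcl
begin

lemma pp_ne_last: assumes "Suc i < k" shows "Suc (pp i) < n"
proof -
  have "pp i < n" using pp_lt assms by simp
  moreover have "pp i \<noteq> n - 1"
  proof
    assume "pp i = n - 1"
    then have "pp i = pp (k - 1)" using ppk by simp
    then have "i = k - 1" using pp_inj[of i "k-1"] assms by simp
    then show False using assms by simp
  qed
  ultimately show ?thesis by linarith
qed

lemma K1: assumes "Suc i < k" shows "rk (Suc (pp i)) + rk (pp (Suc i)) = n"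
proof -
  have i: "i < k" using assms by simp
  have "rk (nx (pp i)) + lt (L!i) = rk (pp i) + gt (L!i)" using F4 pp_lt[OF i] w_pp[OF i] by metis
  then have "rk (Suc (pp i)) = gt (L!i)" using nx_Suc[OF pp_ne_last[OF assms]] rk_pp[OF i] by simp
  moreover have "rk (pp (Suc i)) = lt (L!i) + cn (L!i)" using rk_pp assms lt_next by simp
  ultimately show ?thesis using cnt_sum[of "L!i"] by simp
qed

lemma pv_pos: assumes "0 < q" "q < n" shows "pv q = q - 1"
proof -
  have "pv q = (q + n - 1) mod n" by (simp only: pv_def)
  also have "q + n - 1 = (q - 1) + n" using assms by simp
  also have "((q - 1) + n) mod n = (q - 1) mod n" by (rule mod_add_self2)
  also have "\<dots> = q - 1" using assms by simp
  finally show ?thesis .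
qed

lemma K2:
  assumes q: "q < n" and q': "q' < n" and s: "rk q + rk q' = n"
    and np: "rk q \<noteq> lt (w!q)" and sq: "Suc q < n"
  shows "0 < q'" "rk (Suc q) + rk (q' - 1) = n" "w ! (q' - 1) = w ! q"
proof -
  let ?a = "w!q"
  have f2: "lt ?a \<le> rk q" "rk q < lt ?a + cn ?a" using F2 q by auto
  have rq: "rk q < n" using rk_lt q by simp
  have "rk q' \<noteq> 0" using s rq by linarith
  then show q'0: "0 < q'" using rk0 by (metis gr0I)
  have pvq: "pv q' = q' - 1" using pv_pos q'0 q' by simp
  have e1: "gt ?a \<le> rk q'" "rk q' < gt ?a + cn ?a" using f2 np s cnt_sum[of ?a] by linarith+
  have e2: "gt (w ! pv q') \<le> rk q'" "rk q' < gt (w ! pv q') + cn (w ! pv q')" using F3 q' by auto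
  have wq: "w ! pv q' = ?a" using E_uniq e1 e2 by blast
  then show "w ! (q' - 1) = w ! q" using pvq by simp
  have A: "rk (nx (pv q')) + lt ?a = rk (pv q') + gt ?a" using F4 pv_lt wq by metis
  have A': "rk q' + lt ?a = rk (q' - 1) + gt ?a" using A nx_pv[OF q'] pvq by simp
  have B: "rk (Suc q) + lt ?a = rk q + gt ?a" using F4[OF q] nx_Suc[OF sq] by simp
  show "rk (Suc q) + rk (q' - 1) = n" using A' B s by linarith
qed

definition isPP :: "nat \<Rightarrow> bool" where "isPP q \<longleftrightarrow> (\<exists>j<k. q = pp j)"

lemma isPP_rk: "q < n \<Longrightarrow> isPP q \<longleftrightarrow> rk q = lt (w!q)"
  using isP by (simp add: isPP_def)

definition Nx :: "nat \<Rightarrow> nat" where "Nx i = (LEAST p. pp i < p \<and> isPP p)"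

lemma Nx: assumes "Suc i < k"
  shows "pp i < Nx i" "isPP (Nx i)" "Nx i < n" "\<And>p. pp i < p \<Longrightarrow> p < Nx i \<Longrightarrow> \<not> isPP p"
proof -
  have "isPP (pp (k-1))" unfolding isPP_def using k_pos by (auto intro!: exI[of _ "k-1"])
  then have ex: "pp i < pp (k-1) \<and> isPP (pp (k-1))"
    using ppk pp_ne_last[OF assms] by auto
  show "pp i < Nx i" "isPP (Nx i)" unfolding Nx_def using LeastI[of "\<lambda>p. pp i < p \<and> isPP p", OF ex] by auto
  then show "Nx i < n" using pp_lt unfolding isPP_def by auto
  show "\<And>p. pp i < p \<Longrightarrow> p < Nx i \<Longrightarrow> \<not> isPP p" unfolding Nx_def using not_less_Least by blast
qed

lemma chain: assumes i: "Suc i < k" and m: "pp i + 1 + m \<le> Nx i"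
  shows "m \<le> pp (Suc i) \<and> rk (pp i + 1 + m) + rk (pp (Suc i) - m) = n"
  using m
proof (induction m)
  case 0
  then show ?case using K1[OF i] by simp
next
  case (Suc m)
  let ?q = "pp i + 1 + m" and ?q' = "pp (Suc i) - m"
  have mm: "pp i + 1 + m \<le> Nx i" using Suc.prems by simp
  have IH: "m \<le> pp (Suc i)" "rk ?q + rk ?q' = n" using Suc.IH[OF mm] by auto
  have qN: "?q < Nx i" using Suc.prems by simp
  have npp: "\<not> isPP ?q" using Nx(4)[OF i, of ?q] qN by simp
  have qn: "?q < n" using qN Nx(3)[OF i] by simp
  have ppn: "pp (Suc i) < n" using pp_lt i by simp
  have q'n: "?q' < n" using ppn by linarith
  have sq: "Suc ?q < n" using Suc.prems Nx(3)[OF i] by simp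
  have np: "rk ?q \<noteq> lt (w!?q)" using npp isPP_rk qn by simp
  have k2: "0 < ?q'" "rk (Suc ?q) + rk (?q' - 1) = n" using K2[OF qn q'n IH(2) np sq] by auto
  have e1: "Suc ?q = pp i + 1 + Suc m" by simp
  have e2: "?q' - 1 = pp (Suc i) - Suc m" by simp
  have "Suc m \<le> pp (Suc i)" using k2(1) by linarith
  then show ?case using k2(2) unfolding e1 e2 by simp
qed

lemma chain_letter: assumes i: "Suc i < k" and m: "pp i + 1 + m < Nx i"
  shows "w ! (pp (Suc i) - m - 1) = w ! (pp i + 1 + m)"
proof -
  let ?q = "pp i + 1 + m" and ?q' = "pp (Suc i) - m"
  have IH: "m \<le> pp (Suc i)" "rk ?q + rk ?q' = n" using chain[OF i] m by auto
  have npp: "\<not> isPP ?q" using Nx(4)[OF i, of ?q] m by simp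
  have qn: "?q < n" using m Nx(3)[OF i] by simp
  have q'n: "?q' < n" using pp_lt[of "Suc i"] i by linarith
  have sq: "Suc ?q < n" using m Nx(3)[OF i] by simp
  have np: "rk ?q \<noteq> lt (w!?q)" using npp isPP_rk qn by simp
  show ?thesis using K2(3)[OF qn q'n IH(2) np sq] by simp
qed

lemma K1_inv: assumes "q < n" "Suc j' < k" "rk q + rk (pp (Suc j')) = n" shows "q = Suc (pp j')"
proof -
  have "rk q = rk (Suc (pp j'))" using K1[OF assms(2)] assms(3) by simp
  then show ?thesis using rk_inj assms(1) pp_ne_last[OF assms(2)] by blast
qed

lemma no_PP_mirror: assumes i: "Suc i < k" and m1: "1 \<le> m" and m: "pp i + 1 + m \<le> Nx i"
  shows "\<not> isPP (pp (Suc i) - m)"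
proof
  assume "isPP (pp (Suc i) - m)"
  then obtain j where j: "j < k" "pp (Suc i) - m = pp j" unfolding isPP_def by auto
  have c: "m \<le> pp (Suc i)" "rk (pp i + 1 + m) + rk (pp (Suc i) - m) = n" using chain[OF i m] by auto
  have qn: "pp i + 1 + m < n" using m Nx(3)[OF i] by simp
  have "rk (pp i + 1 + m) < n" using rk_lt qn by simp
  then have "j \<noteq> 0" using c j rk_pp lt_first by (metis add.right_neutral less_irrefl)
  then obtain j' where j': "j = Suc j'" using not0_implies_Suc by blast
  have "pp i + 1 + m = Suc (pp j')" using K1_inv[OF qn] j j' c by simp
  then have "pp j' = pp i + m" by simp
  moreover have "pp i < pp i + m" "pp i + m < Nx i" using m1 m by auto
  moreover have "j' < k" using j j' by simp
  then have "isPP (pp j')" unfolding isPP_def by blast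
  ultimately show False using Nx(4)[OF i, of "pp j'"] by simp
qed

lemma left_nb: assumes i: "Suc i < k"
  shows "\<exists>j'. Suc j' < k \<and> Nx i = pp (Suc j') \<and> pp (Suc i) - (Nx i - pp i - 1) = Suc (pp j')"
proof -
  let ?L = "Nx i - pp i - 1"
  obtain j where j: "j < k" "Nx i = pp j" using Nx(2)[OF i] unfolding isPP_def by auto
  have "j \<noteq> 0"
  proof
    assume "j = 0" then have "Nx i = 0" using j pp0 by simp
    then show False using Nx(1)[OF i] by simp
  qed
  then obtain j' where j': "j = Suc j'" using not0_implies_Suc by blast
  have m: "pp i + 1 + ?L \<le> Nx i" using Nx(1)[OF i] by simp
  have c: "rk (pp i + 1 + ?L) + rk (pp (Suc i) - ?L) = n" using chain[OF i m] by auto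
  have e: "pp i + 1 + ?L = Nx i" using Nx(1)[OF i] by simp
  have "pp (Suc i) - ?L < n" using pp_lt[of "Suc i"] i by linarith
  moreover have "rk (pp (Suc i) - ?L) + rk (pp (Suc j')) = n" using c e j j' by simp
  ultimately have "pp (Suc i) - ?L = Suc (pp j')" using K1_inv j j' by simp
  then show ?thesis using j j' by auto
qed

definition center :: "nat \<Rightarrow> bool" where
  "center c \<longleftrightarrow> 0 < c \<and> c < n \<and> (2 * rk c = n \<or> (Suc c < n \<and> rk c + rk (Suc c) = n))"

lemma center_sym: assumes i: "Suc i < k" and c: "center c" "pp i < c" "c \<le> Nx i"
  shows "Nx i = pp (Suc i)"
proof -
  define m where "m = c - pp i - 1"
  have cm: "c = pp i + 1 + m" using c by (simp add: m_def)
  let ?d = "pp (Suc i) - m"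
  have ch: "m \<le> pp (Suc i)" "rk c + rk ?d = n" using chain[OF i] cm c by auto
  have dn: "?d < n" using pp_lt[of "Suc i"] i by linarith
  have cn: "c < n" using c unfolding center_def by auto
  have dd: "?d = c \<or> (?d = Suc c \<and> Suc c < n)"
  proof (cases "2 * rk c = n")
    case True
    then have "rk ?d = rk c" using ch by simp
    then show ?thesis using rk_inj dn cn by blast
  next
    case False
    then have "Suc c < n" "rk c + rk (Suc c) = n" using c unfolding center_def by auto
    then have "rk ?d = rk (Suc c)" "Suc c < n" using ch by auto
    then show ?thesis using rk_inj dn by blast
  qed
  have A: "\<not> pp (Suc i) < Nx i"
  proof
    assume "pp (Suc i) < Nx i"
    moreover have "pp i < pp (Suc i)"
    proof -
      have "c \<le> ?d" using dd by auto
      then show ?thesis using c(2) by linarith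
    qed
    moreover have "isPP (pp (Suc i))" using i unfolding isPP_def by blast
    ultimately show False using Nx(4)[OF i, of "pp (Suc i)"] by simp
  qed
  have B: "\<not> Nx i < pp (Suc i)"
  proof
    assume lt: "Nx i < pp (Suc i)"
    let ?L = "Nx i - pp i - 1"
    obtain j' where j': "Suc j' < k" "Nx i = pp (Suc j')" "pp (Suc i) - ?L = Suc (pp j')"
      using left_nb[OF i] by blast
    have mL: "m \<le> ?L" using cm c by simp
    have ge: "pp (Suc i) - ?L \<le> Nx i"
    proof (cases "?d = Suc c \<and> m = ?L")
      case True
      then have cN: "c = Nx i" using cm Nx(1)[OF i] by simp
      have "Suc (pp j') = pp (Suc i) - ?L" using j'(3) by simp
      also have "\<dots> = ?d" using conjunct2[OF True] by simp
      also have "\<dots> = Suc c" by (rule conjunct1[OF True])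
      also have "\<dots> = Suc (pp (Suc j'))" using cN j'(2) by simp
      finally have "pp j' = pp (Suc j')" by simp
      then have "j' = Suc j'" using pp_inj[of j' "Suc j'"] j' by simp
      then show ?thesis by simp
    next
      case False
      show ?thesis
      proof (cases "?d = c")
        case True
        then show ?thesis using mL cm c(3) by linarith
      next
        case F2: False
        then have "?d = Suc c" using dd by simp
        then have "m \<noteq> ?L" using False by simp
        then have "m < ?L" using mL by simp
        then have "c < Nx i" using cm c by linarith
        then show ?thesis using \<open>?d = Suc c\<close> mL by linarith
      qed
    qed
    define m2 where "m2 = pp (Suc i) - Nx i"
    have "1 \<le> m2" "pp i + 1 + m2 \<le> Nx i" using lt ge by (auto simp: m2_def)
    then have "\<not> isPP (pp (Suc i) - m2)" using no_PP_mirror[OF i] by blast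
    moreover have "pp (Suc i) - m2 = Nx i" using lt by (simp add: m2_def)
    ultimately show False using Nx(2)[OF i] by simp
  qed
  show ?thesis using A B by simp
qed

end


lemma NT_twice: assumes "q < (N::nat)" "(T + 2*N - 1 - q) mod N = q" "0 < N"
  shows "(2*q) mod N = (T + 2*N - 1) mod N"
proof -
  have "(T + 2*N - 1) mod N = ((T + 2*N - 1 - q) + q) mod N" using assms by simp
  also have "\<dots> = ((T + 2*N - 1 - q) mod N + q) mod N" by (simp add: mod_add_left_eq)
  also have "\<dots> = (q + q) mod N" using assms by simp
  finally show ?thesis by (simp add: mult_2)
qed

lemma NT_twice_conv: assumes "q < (N::nat)" "(2*q) mod N = (T + 2*N - 1) mod N" "0 < N"
  shows "(T + 2*N - 1 - q) mod N = q"
proof -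
  have e: "(T + 2*N - 1 - q) + q = T + 2*N - 1" using assms by simp
  have "((T + 2*N - 1 - q) + q) mod N = (q + q) mod N" unfolding e using assms by (simp add: mult_2)
  then have "((T + 2*N - 1 - q) mod N + q) mod N = (q + q) mod N" by (simp add: mod_add_left_eq)
  moreover define a where "a = (T + 2*N - 1 - q) mod N"
  ultimately have aq: "(a + q) mod N = (q + q) mod N" by simp
  have an: "a < N" using assms by (simp add: a_def)
  have "N dvd nat \<bar>int (a + q) - int (q + q)\<bar>" using aq mod_eq_iff_dvd_symdiff_nat by blast
  moreover have "nat \<bar>int (a + q) - int (q + q)\<bar> < N" using an assms by linarith
  ultimately have "nat \<bar>int (a + q) - int (q + q)\<bar> = 0" by (metis dvd_imp_le gr0I not_less)
  then have "a = q" by simp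
  then show ?thesis by (simp add: a_def)
qed

lemma NT_odd: assumes "odd (N::nat)" "q1 < N" "q2 < N"
  "(2*q1) mod N = (2*q2) mod N" shows "q1 = q2"
proof -
  have key: "\<And>a b. a < N \<Longrightarrow> b < N \<Longrightarrow> a \<le> b \<Longrightarrow> (2*a) mod N = (2*b) mod N \<Longrightarrow> a = b"
  proof -
    fix a b assume ab: "a < N" "b < N" "a \<le> b" "(2*a) mod N = (2*b) mod N"
    then have "N dvd 2*b - 2*a" using mod_eq_dvd_iff_nat[of "2*a" "2*b" N] by simp
    then have "N dvd (b - a) * 2" by (simp add: algebra_simps diff_mult_distrib2)
    then have "N dvd b - a" using coprime_dvd_mult_left_iff[of N 2 "b - a"] assms(1) by simp
    moreover have "b - a < N" using ab by simp
    ultimately have "b - a = 0" using dvd_imp_le by (metis gr0I not_less)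
    then show "a = b" using ab by simp
  qed
  show ?thesis
  proof (cases "q1 \<le> q2")
    case True then show ?thesis using key assms by blast
  next
    case False then show ?thesis using key[of q2 q1] assms by simp
  qed
qed

lemma NT_even:
  assumes ev: "even (N::nat)" and T: "T < N" and N0: "0 < N"
    and no: "\<forall>q<N. (T + N - q) mod N \<noteq> q"
  shows "{q. q < N \<and> (T + 2*N - 1 - q) mod N = q} = {T div 2, T div 2 + N div 2}"
    "T div 2 \<noteq> T div 2 + N div 2"
proof -
  obtain h where h: "N = 2*h" using ev by blast
  have h0: "0 < h" using h N0 by simp
  have Todd: "odd T"
  proof
    assume "even T"
    then obtain e where e: "T = 2*e" by blast
    have "e < N" using e T by simp
    moreover have "(T + N - e) mod N = e"
    proof -
      have "T + N - e = e + N" using e by simp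
      then show ?thesis using \<open>e < N\<close> by simp
    qed
    ultimately show False using no by blast
  qed
  then obtain e where e: "T = 2*e + 1" by (metis oddE)
  have eh: "e < h" using e T h by simp
  have r: "(T + 2*N - 1) mod N = (2*e) mod N"
  proof -
    have "T + 2*N - 1 = 2*e + N*2" using e by simp
    then show ?thesis by simp
  qed
  show "{q. q < N \<and> (T + 2*N - 1 - q) mod N = q} = {T div 2, T div 2 + N div 2}"
  proof (intro set_eqI iffI)
    fix q assume "q \<in> {q. q < N \<and> (T + 2*N - 1 - q) mod N = q}"
    then have q: "q < N" "(T + 2*N - 1 - q) mod N = q" by auto
    have "(2*q) mod N = (2*e) mod N" using NT_twice[OF q N0] r by simp
    then have "2 * (q mod h) = 2 * (e mod h)" using h by (simp add: mod_mult_mult1)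
    then have qm: "q mod h = e" using eh by simp
    have "q div h < 2" using q h h0 by (simp add: div_less_iff_less_mult)
    then have "q div h = 0 \<or> q div h = 1" by auto
    then have "q = e \<or> q = e + h" using qm by (metis add.commute add_cancel_left_left div_mult_mod_eq mult.left_neutral mult_zero_left)
    then show "q \<in> {T div 2, T div 2 + N div 2}" using e h by auto
  next
    fix q assume "q \<in> {T div 2, T div 2 + N div 2}"
    then have qq: "q = e \<or> q = e + h" using e h by auto
    then have qN: "q < N" using eh h by auto
    have "(2*q) mod N = (2*e) mod N"
      using qq h by (auto simp: algebra_simps)
    then have "(T + 2*N - 1 - q) mod N = q" using NT_twice_conv[OF qN _ N0] r by simp
    then show "q \<in> {q. q < N \<and> (T + 2*N - 1 - q) mod N = q}" using qN by simp
  qed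
  show "T div 2 \<noteq> T div 2 + N div 2" using h0 h by simp
qed

context pcl
begin

lemma pair_sum: assumes "q < n"
  shows "rk q + rk (nx q) = n \<longleftrightarrow> 2 * rk q = 2 * lt (w!q) + cn (w!q)"
    "rk q + rk (nx q) + 1 = n \<longleftrightarrow> 2 * rk q + 1 = 2 * lt (w!q) + cn (w!q)"
proof -
  have f4: "rk (nx q) + lt (w!q) = rk q + gt (w!q)" using F4 assms by blast
  have f2: "lt (w!q) \<le> rk q" using F2 assms by blast
  have cs: "lt (w!q) + cn (w!q) + gt (w!q) = n" by (rule cnt_sum)
  show "rk q + rk (nx q) = n \<longleftrightarrow> 2 * rk q = 2 * lt (w!q) + cn (w!q)" using f4 f2 cs by linarith
  show "rk q + rk (nx q) + 1 = n \<longleftrightarrow> 2 * rk q + 1 = 2 * lt (w!q) + cn (w!q)" using f4 f2 cs by linarith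
qed

lemma sum_cn: "(\<Sum>i<k. cn (L!i)) = n"
proof -
  let ?A = "\<lambda>i. {y. y < n \<and> w!y = L!i}"
  have "(\<Union>i\<in>{..<k}. ?A i) = {..<n}" using w_idx by auto
  moreover have "card (\<Union>i\<in>{..<k}. ?A i) = (\<Sum>i<k. card (?A i))"
    by (rule card_UN_disjoint) (auto simp: L_eq_iff)
  ultimately show ?thesis by (simp add: cn_def)
qed

lemma parity: "even n \<longleftrightarrow> even (card {i. i < k \<and> odd (cn (L!i))})"
proof -
  have "even n \<longleftrightarrow> even (card {i\<in>{..<k}. odd (cn (L!i))})"
    using sum_cn even_sum_iff[of "{..<k}" "\<lambda>i. cn (L!i)"] by simp
  moreover have "{i\<in>{..<k}. odd (cn (L!i))} = {i. i < k \<and> odd (cn (L!i))}" by auto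
  ultimately show ?thesis by simp
qed

definition mid :: "nat \<Rightarrow> nat" where "mid i = pos (lt (L!i) + cn (L!i) div 2)"

lemma mid: assumes i: "i < k" shows "mid i < n" "rk (mid i) = lt (L!i) + cn (L!i) div 2" "w ! mid i = L!i"
proof -
  have c: "0 < cn (L!i)" using cnL_pos i by simp
  have r: "lt (L!i) + cn (L!i) div 2 < n" using cnt_sum[of "L!i"] c by linarith
  show "mid i < n" "rk (mid i) = lt (L!i) + cn (L!i) div 2" using pos[OF r] by (auto simp: mid_def)
  then have "lt (L!i) \<le> rk (mid i)" "rk (mid i) < lt (L!i) + cn (L!i)" using c by auto
  moreover have "lt (w!mid i) \<le> rk (mid i)" "rk (mid i) < lt (w!mid i) + cn (w!mid i)"
    using F2 \<open>mid i < n\<close> by auto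
  ultimately show "w ! mid i = L!i" using S_uniq by blast
qed

lemma mid_inj: "i < k \<Longrightarrow> j < k \<Longrightarrow> mid i = mid j \<Longrightarrow> i = j"
  using mid(3) L_eq_iff by metis

definition C1 where "C1 = {c. 0 < c \<and> c < n \<and> 2 * rk c = n}"
definition C2 where "C2 = {c. 0 < c \<and> Suc c < n \<and> rk c + rk (Suc c) = n}"
definition Ev where "Ev = {i. i < k \<and> even (cn (L!i))}"
definition Od where "Od = {i. i < k \<and> odd (cn (L!i))}"
definition Ofx where "Ofx = {q. q < n \<and> rk q + rk (nx q) + 1 = n}"

lemma card_C1: "card C1 = (if even n then 1 else 0)"
proof (cases "even n")
  case True
  then obtain h where h: "n = 2*h" by blast
  then have h0: "0 < h" "h < n" using n_pos by auto
  have "C1 = {pos h}"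
  proof (intro set_eqI iffI)
    fix c assume "c \<in> C1"
    then have "c < n" "rk c = h" using h by (auto simp: C1_def)
    then show "c \<in> {pos h}" using pos_eqI by simp
  next
    fix c assume "c \<in> {pos h}"
    then have c: "c = pos h" by simp
    have "rk c = h" "c < n" using pos h0 c by auto
    moreover have "c \<noteq> 0"
    proof
      assume "c = 0" then have "rk c = 0" using rk0 by simp
      then show False using h0 \<open>rk c = h\<close> by simp
    qed
    ultimately show "c \<in> C1" using h by (auto simp: C1_def)
  qed
  then show ?thesis using True by simp
next
  case False
  { fix x assume "2 * rk x = n" then have "even n" by (metis dvd_triv_left)
    with False have False by simp }
  then have "C1 = {}" by (auto simp: C1_def)
  then show ?thesis using False by simp
qed

lemma card_C2: "card C2 = card Ev"
proof -
  have img: "C2 = mid ` Ev"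
  proof (intro set_eqI iffI)
    fix c assume "c \<in> C2"
    then have c: "0 < c" "Suc c < n" "rk c + rk (Suc c) = n" by (auto simp: C2_def)
    obtain i where i: "i < k" "w!c = L!i" using w_idx[of c] c(2) by auto
    have "rk c + rk (nx c) = n" using c nx_Suc by simp
    then have e: "2 * rk c = 2 * lt (L!i) + cn (L!i)" using pair_sum(1)[of c] c i by simp
    then have ev: "even (cn (L!i))" by (metis dvd_add_right_iff dvd_triv_left)
    then have "rk c = lt (L!i) + cn (L!i) div 2" using e by auto
    then have "c = mid i" using mid[OF i(1)] c rk_inj by (metis Suc_lessD)
    then show "c \<in> mid ` Ev" using i ev by (auto simp: Ev_def)
  next
    fix c assume "c \<in> mid ` Ev"
    then obtain i where i: "i < k" "even (cn (L!i))" "c = mid i" by (auto simp: Ev_def)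
    have cp: "0 < cn (L!i)" using cnL_pos i by simp
    have cn2: "2 \<le> cn (L!i)" using i(2) cp by presburger
    have m: "c < n" "rk c = lt (L!i) + cn (L!i) div 2" "w!c = L!i" using mid i by auto
    have c0: "c \<noteq> 0" using rk0 m cn2 by (metis add_is_0 div_greater_zero_iff less_numeral_extra(3) zero_less_numeral)
    have cl: "c \<noteq> n - 1"
    proof
      assume "c = n - 1"
      then have "c = pp (k-1)" using ppk by simp
      then have "L!i = L!(k-1)" "rk c = lt (L!(k-1))" using w_pp rk_pp k_pos m by auto
      then show False using m cn2 by simp
    qed
    have sc: "Suc c < n" using m cl by linarith
    have "2 * rk c = 2 * lt (w!c) + cn (w!c)" using m i(2) by auto
    then have "rk c + rk (nx c) = n" using pair_sum(1)[of c] m by simp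
    then show "c \<in> C2" using sc c0 nx_Suc by (auto simp: C2_def)
  qed
  have "inj_on mid Ev" using mid_inj by (auto simp: inj_on_def Ev_def)
  then show ?thesis using img by (simp add: card_image)
qed

lemma card_Ofx: "card Ofx = card Od"
proof -
  have img: "Ofx = mid ` Od"
  proof (intro set_eqI iffI)
    fix c assume "c \<in> Ofx"
    then have c: "c < n" "rk c + rk (nx c) + 1 = n" by (auto simp: Ofx_def)
    obtain i where i: "i < k" "w!c = L!i" using w_idx c by auto
    have e: "2 * rk c + 1 = 2 * lt (L!i) + cn (L!i)" using pair_sum(2)[of c] c i by simp
    then have od: "odd (cn (L!i))" by presburger
    then have "rk c = lt (L!i) + cn (L!i) div 2" using e by presburger
    then have "c = mid i" using mid[OF i(1)] c rk_inj by metis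
    then show "c \<in> mid ` Od" using i od by (auto simp: Od_def)
  next
    fix c assume "c \<in> mid ` Od"
    then obtain i where i: "i < k" "odd (cn (L!i))" "c = mid i" by (auto simp: Od_def)
    have m: "c < n" "rk c = lt (L!i) + cn (L!i) div 2" "w!c = L!i" using mid i by auto
    have "2 * rk c + 1 = 2 * lt (w!c) + cn (w!c)" using m i(2) by presburger
    then have "rk c + rk (nx c) + 1 = n" using pair_sum(2)[of c] m by simp
    then show "c \<in> Ofx" using m by (auto simp: Ofx_def)
  qed
  have "inj_on mid Od" using mid_inj by (auto simp: inj_on_def Od_def)
  then show ?thesis using img by (simp add: card_image)
qed

lemma tt_nx: assumes "q < n" shows "(tt + n - nx q) mod n = (tt + 2*n - 1 - q) mod n"
proof (cases "Suc q < n")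
  case True
  then have "tt + 2*n - 1 - q = (tt + n - nx q) + n" using nx_Suc by simp
  then show ?thesis by simp
next
  case False
  then have "Suc q = n" using assms by simp
  then have "nx q = 0" by (simp add: nx_def)
  then show ?thesis using \<open>Suc q = n\<close> by (simp add: mult_2)
qed

lemma Ofx_char: "Ofx = {q. q < n \<and> (tt + 2*n - 1 - q) mod n = q}"
proof (intro set_eqI iffI)
  fix q assume "q \<in> Ofx"
  then have q: "q < n" "rk q + rk (nx q) + 1 = n" by (auto simp: Ofx_def)
  have "rk ((tt + 2*n - 1 - q) mod n) = n - 1 - rk (nx q)" using refl_rk[of "nx q"] nx_lt tt_nx q by simp
  also have "\<dots> = rk q" using q by simp
  finally have "(tt + 2*n - 1 - q) mod n = q" using rk_inj q n_pos by simp
  then show "q \<in> {q. q < n \<and> (tt + 2*n - 1 - q) mod n = q}" using q by simp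
next
  fix q assume "q \<in> {q. q < n \<and> (tt + 2*n - 1 - q) mod n = q}"
  then have q: "q < n" "(tt + 2*n - 1 - q) mod n = q" by auto
  have "rk q = n - 1 - rk (nx q)" using refl_rk[of "nx q"] nx_lt tt_nx q by simp
  moreover have "rk (nx q) < n" using rk_lt nx_lt by simp
  ultimately show "q \<in> Ofx" using q by (simp add: Ofx_def)
qed

lemma card_Od: "card Od = (if even n then 2 else 1)"
proof (cases "even n")
  case True
  have no: "\<forall>q<n. (tt + n - q) mod n \<noteq> q"
  proof (intro allI impI notI)
    fix q assume q: "q < n" "(tt + n - q) mod n = q"
    have "rk ((tt + n - q) mod n) = n - 1 - rk q" using refl_rk q(1) by simp
    then have "rk q = n - 1 - rk q" using q(2) by simp
    moreover have "rk q < n" using rk_lt q by simp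
    ultimately have "2 * rk q + 1 = n" by simp
    moreover have "odd (2 * rk q + 1)" by simp
    ultimately show False using True by simp
  qed
  have "Ofx = {q. q < n \<and> (tt + 2*n - 1 - q) mod n = q}" by (rule Ofx_char)
  also have "\<dots> = {tt div 2, tt div 2 + n div 2}" by (rule NT_even(1)[OF True tt(1) n_pos no])
  finally have "Ofx = {tt div 2, tt div 2 + n div 2}" .
  moreover have "tt div 2 \<noteq> tt div 2 + n div 2" by (rule NT_even(2)[OF True tt(1) n_pos no])
  ultimately have "card Ofx = 2" by simp
  then show ?thesis using card_Ofx True by simp
next
  case False
  have "card Ofx \<le> Suc 0"
  proof -
    have "\<forall>a\<in>Ofx. \<forall>b\<in>Ofx. a = b"
    proof (intro ballI)
      fix a b assume "a \<in> Ofx" "b \<in> Ofx"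
      then have a: "a < n" "(tt + 2*n - 1 - a) mod n = a" and b: "b < n" "(tt + 2*n - 1 - b) mod n = b"
        using Ofx_char by auto
      have "(2*a) mod n = (2*b) mod n" using NT_twice[OF a n_pos] NT_twice[OF b n_pos] by simp
      then show "a = b" using NT_odd[OF False a(1) b(1)] by simp
    qed
    moreover have "finite Ofx" unfolding Ofx_def by simp
    ultimately show ?thesis using card_le_Suc0_iff_eq by blast
  qed
  moreover have "odd (card Od)" using parity False by (simp add: Od_def)
  moreover have "card Od \<noteq> 0"
  proof
    assume "card Od = 0" then show False using \<open>odd (card Od)\<close> by simp
  qed
  ultimately have "card Od = 1" using card_Ofx by linarith
  then show ?thesis using False by simp
qed

lemma card_centers: "card {c. center c} = k - 1"
proof -
  have "{c. center c} = C1 \<union> C2" by (auto simp: center_def C1_def C2_def)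
  moreover have "C1 \<inter> C2 = {}"
  proof -
    { fix c assume "c \<in> C1" "c \<in> C2"
      then have "rk (Suc c) = rk c" "Suc c < n" "c < n" by (auto simp: C1_def C2_def)
      then have False using rk_inj by fastforce }
    then show ?thesis by auto
  qed
  moreover have "C1 \<subseteq> {..<n}" "C2 \<subseteq> {..<n}" by (auto simp: C1_def C2_def)
  then have "finite C1" "finite C2" by (auto intro: finite_subset)
  ultimately have "card {c. center c} = card C1 + card C2" by (simp add: card_Un_disjoint)
  moreover have "card Ev + card Od = k"
  proof -
    have "Ev \<union> Od = {..<k}" "Ev \<inter> Od = {}" by (auto simp: Ev_def Od_def)
    moreover have "finite Ev" "finite Od" by (auto simp: Ev_def Od_def)
    ultimately show ?thesis by (metis card_Un_disjoint card_lessThan)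
  qed
  ultimately show ?thesis using card_C1 card_C2 card_Od
  proof (cases "even n")
    case True
    then have "card C1 = 1" "card Od = 2" using card_C1 card_Od by auto
    then show ?thesis using \<open>card {c. center c} = card C1 + card C2\<close> \<open>card Ev + card Od = k\<close> card_C2 by linarith
  next
    case False
    then have "card C1 = 0" "card Od = 1" using card_C1 card_Od by auto
    then show ?thesis using \<open>card {c. center c} = card C1 + card C2\<close> \<open>card Ev + card Od = k\<close> card_C2 by linarith
  qed
qed

end


context pcl
begin

lemma gap_exists: assumes q: "0 < q" "q < n" shows "\<exists>i. Suc i < k \<and> pp i < q \<and> q \<le> Nx i"
proof -
  define S where "S = {j. j < k \<and> pp j < q}"
  have fin: "finite S" by (simp add: S_def)
  have ne: "0 \<in> S" using pp0 k_pos q by (simp add: S_def)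
  define p where "p = Max (pp ` S)"
  have "p \<in> pp ` S" using fin ne unfolding p_def by (intro Max_in) auto
  then obtain i where i: "i \<in> S" "pp i = p" by auto
  have mx: "\<And>j. j \<in> S \<Longrightarrow> pp j \<le> pp i" using i fin unfolding p_def by (metis Max_ge finite_imageI imageI)
  have ik: "i < k" "pp i < q" using i by (auto simp: S_def)
  have "i \<noteq> k - 1"
  proof
    assume "i = k - 1" then have "pp i = n - 1" using ppk by simp
    then show False using ik q by simp
  qed
  then have si: "Suc i < k" using ik by simp
  have "q \<le> Nx i"
  proof (rule ccontr)
    assume "\<not> q \<le> Nx i"
    then have "Nx i < q" by simp
    moreover obtain j where j: "j < k" "Nx i = pp j" using Nx(2)[OF si] unfolding isPP_def by auto
    ultimately have "j \<in> S" by (simp add: S_def)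
    then have "pp j \<le> pp i" using mx by simp
    then show False using j Nx(1)[OF si] by simp
  qed
  then show ?thesis using si ik by blast
qed

lemma gap_unique: assumes i: "Suc i < k" "pp i < q" "q \<le> Nx i" and i': "Suc i' < k" "pp i' < q" "q \<le> Nx i'"
  shows "i = i'"
proof -
  have a: "\<not> pp i < pp i'"
  proof
    assume "pp i < pp i'"
    moreover have "pp i' < Nx i" using i i' by simp
    moreover have "isPP (pp i')" using i'(1) unfolding isPP_def by (auto intro!: exI[of _ i'])
    ultimately show False using Nx(4)[OF i(1)] by blast
  qed
  have b: "\<not> pp i' < pp i"
  proof
    assume "pp i' < pp i"
    moreover have "pp i < Nx i'" using i i' by simp
    moreover have "isPP (pp i)" using i(1) unfolding isPP_def by (auto intro!: exI[of _ i])
    ultimately show False using Nx(4)[OF i'(1)] by blast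
  qed
  have "pp i = pp i'" using a b by simp
  then show ?thesis using pp_inj i i' by simp
qed

definition gi :: "nat \<Rightarrow> nat" where "gi q = (SOME i. Suc i < k \<and> pp i < q \<and> q \<le> Nx i)"

lemma gi: "0 < q \<Longrightarrow> q < n \<Longrightarrow> Suc (gi q) < k \<and> pp (gi q) < q \<and> q \<le> Nx (gi q)"
  unfolding gi_def by (rule someI_ex) (rule gap_exists)

lemma sym_chain: assumes i: "Suc i < k" and s: "Nx i = pp (Suc i)" and c: "pp i < c" "c \<le> Nx i"
  shows "rk c + rk (pp i + 1 + Nx i - c) = n"
proof -
  define m where "m = c - pp i - 1"
  have cm: "c = pp i + 1 + m" using c by (simp add: m_def)
  have "rk (pp i + 1 + m) + rk (pp (Suc i) - m) = n" using chain[OF i] cm c by auto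
  moreover have "pp (Suc i) - m = pp i + 1 + Nx i - c" using s cm c by simp
  ultimately show ?thesis using cm by simp
qed

lemma center_pos: assumes i: "Suc i < k" and s: "Nx i = pp (Suc i)" and c: "center c" "pp i < c" "c \<le> Nx i"
  shows "c = (pp i + 1 + Nx i) div 2"
proof -
  let ?d = "pp i + 1 + Nx i - c"
  have r: "rk c + rk ?d = n" using sym_chain[OF i s c(2,3)] .
  have dn: "?d < n" using c Nx(3)[OF i] by linarith
  have cn: "c < n" using c unfolding center_def by auto
  have "?d = c \<or> ?d = Suc c"
  proof (cases "2 * rk c = n")
    case True
    then have "rk ?d = rk c" using r by simp
    then show ?thesis using rk_inj dn cn by blast
  next
    case False
    then have "Suc c < n" "rk c + rk (Suc c) = n" using c unfolding center_def by auto
    then have "rk ?d = rk (Suc c)" "Suc c < n" using r by auto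
    then show ?thesis using rk_inj dn by blast
  qed
  then show ?thesis using c by linarith
qed

lemma all_sym: assumes i: "Suc i < k" shows "Nx i = pp (Suc i)"
proof -
  let ?C = "{c. center c}"
  have fC: "finite ?C" by (rule finite_subset[of _ "{..<n}"]) (auto simp: center_def)
  have sub: "gi ` ?C \<subseteq> {..<k-1}"
  proof
    fix x assume "x \<in> gi ` ?C"
    then obtain c where "center c" "x = gi c" by auto
    then show "x \<in> {..<k-1}" using gi[of c] unfolding center_def by auto
  qed
  have inj: "inj_on gi ?C"
  proof (rule inj_onI)
    fix c1 c2 assume c1: "c1 \<in> ?C" and c2: "c2 \<in> ?C" and e: "gi c1 = gi c2"
    let ?i = "gi c1"
    have g1: "Suc ?i < k" "pp ?i < c1" "c1 \<le> Nx ?i" using gi[of c1] c1 unfolding center_def by auto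
    have g2: "Suc ?i < k" "pp ?i < c2" "c2 \<le> Nx ?i" using gi[of c2] c2 e unfolding center_def by auto
    have s: "Nx ?i = pp (Suc ?i)" using center_sym[OF g1(1)] c1 g1 by simp
    have "c1 = (pp ?i + 1 + Nx ?i) div 2" using center_pos[OF g1(1) s] c1 g1 by simp
    moreover have "c2 = (pp ?i + 1 + Nx ?i) div 2" using center_pos[OF g2(1) s] c2 g2 by simp
    ultimately show "c1 = c2" by simp
  qed
  have "card (gi ` ?C) = k - 1" using inj card_centers by (simp add: card_image)
  then have "gi ` ?C = {..<k-1}" using sub by (intro card_subset_eq) auto
  moreover have "i \<in> {..<k-1}" using i by simp
  ultimately have "i \<in> gi ` ?C" by simp
  then obtain c where c0: "c \<in> ?C" "i = gi c" by (rule imageE)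
  then have c: "center c" "gi c = i" by auto
  have g: "Suc i < k" "pp i < c" "c \<le> Nx i" using gi[of c] c unfolding center_def by auto
  show ?thesis using center_sym[OF g(1) c(1) g(2) g(3)] .
qed

lemma pp_step: assumes "Suc i < k" shows "pp i < pp (Suc i)"
  using Nx(1)[OF assms] all_sym[OF assms] by simp

lemma pp_between: assumes "Suc i < k" "pp i < p" "p < pp (Suc i)" shows "\<not> isPP p"
  using Nx(4)[OF assms(1)] all_sym[OF assms(1)] assms by simp

lemma palin: assumes i: "Suc i < k" and m: "pp i + 1 + m < pp (Suc i)"
  shows "w ! (pp (Suc i) - m - 1) = w ! (pp i + 1 + m)"
  using chain_letter[OF i] all_sym[OF i] m by simp

lemma pp_mono: assumes "i < j" "j < k" shows "pp i < pp j"
  using assms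
proof (induction j)
  case 0 then show ?case by simp
next
  case (Suc j)
  then show ?case using pp_step[of j] by (cases "i = j") auto
qed

end


lemma append_less_cancel_left: "zs @ xs < zs @ (ys::'a::linorder list) \<Longrightarrow> xs < ys"
  by (induct zs) auto

lemma append_less_same_len_le:
  fixes xs ys :: "'a::linorder list"
  assumes "length xs = length ys" "xs @ us < ys @ vs" shows "xs \<le> ys"
proof (rule ccontr)
  assume "\<not> xs \<le> ys"
  then have "ys < xs" by auto
  then have "ys @ vs < xs @ us" using less_append_same_len assms(1) by metis
  then show False using assms(2) by auto
qed

context pcl
begin

lemma suffix_order: assumes y1: "y1 < n" and y2: "y2 < n" and r: "rot y1 < rot y2"
  shows "drop y1 w \<le> drop y2 w"
proof (rule ccontr)
  assume "\<not> drop y1 w \<le> drop y2 w"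
  then have BA: "drop y2 w < drop y1 w" by auto
  define A where "A = drop y1 w"
  define B where "B = drop y2 w"
  have rA: "rot y1 = A @ take y1 w" using rot_drop_take y1 by (simp add: A_def)
  have rB: "rot y2 = B @ take y2 w" using rot_drop_take y2 by (simp add: B_def)
  have lA: "length A = n - y1" and lB: "length B = n - y2" by (auto simp: A_def B_def)
  from BA have "(B, A) \<in> lexord {(u, v). u < v}" by (simp add: list_less_def A_def B_def)
  then consider (pre) "length B < length A \<and> take (length B) A = B"
    | (diff) i where "i < min (length B) (length A)" "take i B = take i A" "B!i < A!i"
    unfolding lexord_take_index_conv by auto
  then show False
  proof cases
    case diff
    have "\<forall>j<i. rot y2 ! j = rot y1 ! j"
    proof (intro allI impI)
      fix j assume "j < i"
      then have "B!j = A!j" using diff by (metis nth_take)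
      then show "rot y2 ! j = rot y1 ! j" using rA rB diff \<open>j < i\<close> by (simp add: nth_append)
    qed
    moreover have "rot y2 ! i < rot y1 ! i" using rA rB diff by (simp add: nth_append)
    moreover have "i < n" using diff lA by linarith
    ultimately have "rot y2 < rot y1" using lex_less_eq_len[of "rot y2" "rot y1"] by auto
    then show False using r by simp
  next
    case pre
    then have "length B < length A" by simp
    then have y12: "y1 < y2" using lA lB y1 y2 by linarith
    define C where "C = drop (length B) A"
    have ABC: "A = B @ C" using pre by (metis C_def append_take_drop_id)
    have lC: "length C = y2 - y1" using lA lB y12 y2 by (simp add: C_def)
    define r where "r = y1 + (n - y2)"
    have r0: "0 < r" "r < n" using y12 y2 by (auto simp: r_def)
    have Cdrop: "C = drop r w" by (simp add: C_def A_def lB r_def add.commute)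
    have lCr: "length C + r = n" using lC y12 y2 by (simp add: r_def)
    have "w < rot r"
    proof -
      have "rot r \<noteq> w" using rot_inj[of r 0] r0 n_pos by auto
      then show ?thesis using lyn_min r0 by (metis order.not_eq_order_implies_strict)
    qed
    moreover have rr: "rot r = C @ take r w" using rot_drop_take r0 Cdrop by simp
    ultimately have wl: "w < C @ take r w" by simp
    have "\<exists>m<length C. (\<forall>j<m. w!j = C!j) \<and> w!m < C!m"
    proof (rule ccontr)
      assume nm: "\<not> (\<exists>m<length C. (\<forall>j<m. w!j = C!j) \<and> w!m < C!m)"
      obtain m where m: "m < n" "\<forall>j<m. w!j = (C @ take r w)!j" "w!m < (C @ take r w)!m"
        using wl lex_less_eq_len[of w "C @ take r w"] lCr by auto
      have "\<not> m < length C"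
      proof
        assume mC: "m < length C"
        then have "\<forall>j<m. w!j = C!j" using m by (simp add: nth_append)
        moreover have "w!m < C!m" using m mC by (simp add: nth_append)
        ultimately show False using nm mC by blast
      qed
      then have "\<forall>j<length C. w!j = C!j" using m by (auto simp: nth_append)
      then have tC: "take (length C) w = C" using lCr by (intro nth_equalityI) auto
      define E where "E = drop (length C) w"
      define D where "D = take r w"
      have wCE: "w = C @ E" using tC by (metis E_def append_take_drop_id)
      have wDC: "w = D @ C" using Cdrop by (simp add: D_def)
      have lDE: "length D = length E" using lCr r0 by (simp add: D_def E_def)
      have "C @ E < C @ D" using wl wCE by (simp add: D_def)
      then have ED: "E < D" by (rule append_less_cancel_left)
      have lc: "0 < length C" "length C < n" using lCr r0 by auto
      have "w < rot (length C)"
      proof -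
        have "rot (length C) \<noteq> w" using rot_inj[of "length C" 0] lc n_pos by auto
        then show ?thesis using lyn_min lc by (metis order.not_eq_order_implies_strict)
      qed
      moreover have "rot (length C) = E @ take (length C) w" using rot_drop_take lc by (simp add: E_def)
      ultimately have "D @ C < E @ C" using wDC tC by simp
      then have "D \<le> E" using append_less_same_len_le lDE by blast
      then show False using ED by simp
    qed
    then obtain m where m: "m < length C" "\<forall>j<m. w!j = C!j" "w!m < C!m" by blast
    have r1: "rot y1 = B @ C @ take y1 w" using rA ABC by simp
    have mt: "\<And>j. j \<le> m \<Longrightarrow> take y2 w ! j = w ! j" using m lC y12 by simp
    have "\<forall>j<length B + m. rot y2 ! j = rot y1 ! j"
    proof (intro allI impI)
      fix j assume j: "j < length B + m"
      show "rot y2 ! j = rot y1 ! j"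
      proof (cases "j < length B")
        case True then show ?thesis using r1 rB by (simp add: nth_append)
      next
        case False
        then have "j - length B < m" using j by simp
        then show ?thesis using r1 rB False m mt by (simp add: nth_append)
      qed
    qed
    moreover have "rot y2 ! (length B + m) < rot y1 ! (length B + m)"
      using r1 rB m mt by (simp add: nth_append)
    moreover have "length B + m < n" using lB lC m y2 y12 by simp
    ultimately have "rot y2 < rot y1" using lex_less_eq_len[of "rot y2" "rot y1"] by auto
    then show False using r by simp
  qed
qed

end


context pcl
begin

definition cps :: "'a list list" where
  "cps = map (\<lambda>i. take (pp (Suc i) - pp i - 1) (drop (Suc (pp i)) w)) [0..<k-1]"

lemma cps_len: "length cps = k - 1" by (simp add: cps_def)

lemma cps_nth: assumes "Suc i < k" shows "cps ! i = take (pp (Suc i) - pp i - 1) (drop (Suc (pp i)) w)"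
proof -
  have "i < k - 1" using assms by simp
  then show ?thesis by (simp add: cps_def)
qed

lemma drop_L_last: "drop (k - 1) L = [L!(k-1)]"
proof -
  have "drop (k-1) L = L!(k-1) # drop (Suc (k-1)) L" using k_pos by (intro Cons_nth_drop_Suc[symmetric]) simp
  then show ?thesis using k_pos by simp
qed

lemma drop_L_step: assumes "Suc i < k" shows "drop i L = L!i # L!Suc i # drop (Suc (Suc i)) L"
proof -
  have "drop i L = L!i # drop (Suc i) L" using assms by (intro Cons_nth_drop_Suc[symmetric]) simp
  also have "drop (Suc i) L = L!Suc i # drop (Suc (Suc i)) L" using assms by (intro Cons_nth_drop_Suc[symmetric]) simp
  finally show ?thesis .
qed

lemma drop_w_last: "drop (n - 1) w = [w!(n-1)]"
proof -
  have "drop (n-1) w = w!(n-1) # drop (Suc (n-1)) w" using n_pos by (intro Cons_nth_drop_Suc[symmetric]) simp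
  then show ?thesis using n_pos by simp
qed

lemma sw_cps: "i < k \<Longrightarrow> sw (drop i L) (drop i cps) = drop (pp i) w"
proof (induction "k - 1 - i" arbitrary: i)
  case 0
  then have i: "i = k - 1" by simp
  have "sw (drop i L) (drop i cps) = [L!(k-1)]" using i drop_L_last by simp
  also have "\<dots> = drop (pp i) w"
  proof -
    have "w ! pp (k-1) = L!(k-1)" using w_pp k_pos by simp
    then have "w ! (n-1) = L!(k-1)" using ppk by simp
    then show ?thesis using i ppk drop_w_last by simp
  qed
  finally show ?case .
next
  case (Suc d)
  then have si: "Suc i < k" by simp
  have IH: "sw (drop (Suc i) L) (drop (Suc i) cps) = drop (pp (Suc i)) w"
    using Suc.hyps(1)[of "Suc i"] Suc.hyps(2) si by simp
  have dc: "drop i cps = cps!i # drop (Suc i) cps" using si cps_len by (intro Cons_nth_drop_Suc[symmetric]) simp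
  have dL: "drop (Suc i) L = L!Suc i # drop (Suc (Suc i)) L" using si by (intro Cons_nth_drop_Suc[symmetric]) simp
  have "sw (drop i L) (drop i cps) = L!i # cps!i @ sw (drop (Suc i) L) (drop (Suc i) cps)"
    using drop_L_step[OF si] dc dL by simp
  also have "\<dots> = L!i # cps!i @ drop (pp (Suc i)) w" using IH by simp
  also have "\<dots> = drop (pp i) w"
  proof -
    let ?l = "pp (Suc i) - pp i - 1"
    have ps: "pp i < pp (Suc i)" using pp_step si by simp
    have pn: "pp i < n" using pp_lt si by simp
    have "drop (pp i) w = w!pp i # drop (Suc (pp i)) w" using pn by (simp add: Cons_nth_drop_Suc)
    also have "drop (Suc (pp i)) w = take ?l (drop (Suc (pp i)) w) @ drop ?l (drop (Suc (pp i)) w)"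
      by (rule append_take_drop_id[symmetric])
    also have "drop ?l (drop (Suc (pp i)) w) = drop (pp (Suc i)) w" using ps by simp
    finally show ?thesis using cps_nth[OF si] w_pp si by simp
  qed
  finally show ?case .
qed

lemma cps_pal: assumes si: "Suc i < k" shows "rev (cps!i) = cps!i"
proof -
  let ?l = "pp (Suc i) - pp i - 1"
  have ps: "pp i < pp (Suc i)" using pp_step si by simp
  have pn: "pp (Suc i) < n" using pp_lt si by simp
  have len: "length (cps!i) = ?l" using cps_nth[OF si] ps pn by simp
  have nth: "\<And>m. m < ?l \<Longrightarrow> cps!i ! m = w!(pp i + 1 + m)" using cps_nth[OF si] ps pn by simp
  show ?thesis
  proof (rule nth_equalityI)
    show "length (rev (cps!i)) = length (cps!i)" by simp
    fix m assume "m < length (rev (cps!i))"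
    then have m: "m < ?l" using len by simp
    have "rev (cps!i) ! m = cps!i ! (?l - Suc m)" using len m by (simp add: rev_nth)
    also have "\<dots> = w!(pp i + 1 + (?l - Suc m))" using nth m by simp
    also have "pp i + 1 + (?l - Suc m) = pp (Suc i) - m - 1" using m ps by simp
    also have "w!(pp (Suc i) - m - 1) = w!(pp i + 1 + m)" using palin[OF si] m by simp
    finally show "rev (cps!i) ! m = cps!i ! m" using nth m by simp
  qed
qed

lemma cps_psf: "palindromic_special_factorization w cps"
proof -
  have "w = sw L cps" using sw_cps[of 0] k_pos pp0 by simp
  moreover have "length cps + 1 = k" using cps_len k_pos by simp
  moreover have "\<forall>p\<in>set cps. rev p = p"
  proof
    fix p assume "p \<in> set cps"
    then obtain i where "i < length cps" "p = cps!i" by (metis in_set_conv_nth)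
    then show "rev p = p" using cps_pal cps_len by simp
  qed
  ultimately show ?thesis unfolding palindromic_special_factorization_def special_factorization_def by simp
qed

end


context pcl
begin

lemma zmax:
  assumes j: "j < k" and s: "s < n" "w!s = L!j" and D: "D \<le> pp j" "s + D < n"
    and eq: "\<forall>m<D. w!(s+m) = w!(pp j - m)" and lt: "w!(pp j - D) < w!(s + D)"
  shows False
proof -
  let ?P = "pp j"
  define z where "z = (tt + 2*n - 1 - ?P) mod n"
  have Pn: "?P < n" using pp_lt j by simp
  have zn: "z < n" using n_pos by (simp add: z_def)
  have zm: "\<And>m. m \<le> ?P \<Longrightarrow> (z + m) mod n = (tt + 2*n - 1 - (?P - m)) mod n"
  proof -
    fix m assume m: "m \<le> ?P"
    have "(z + m) mod n = (tt + 2*n - 1 - ?P + m) mod n" by (simp add: z_def mod_add_left_eq)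
    also have "tt + 2*n - 1 - ?P + m = tt + 2*n - 1 - (?P - m)" using m Pn by simp
    finally show "(z + m) mod n = (tt + 2*n - 1 - (?P - m)) mod n" .
  qed
  have rotz: "\<And>m. m \<le> ?P \<Longrightarrow> rot z ! m = w!(?P - m)"
  proof -
    fix m assume m: "m \<le> ?P"
    have "rot z ! m = w!((z + m) mod n)" using rot_nth m Pn by simp
    also have "\<dots> = w!((tt + 2*n - 1 - (?P - m)) mod n)" using zm m by simp
    also have "\<dots> = w!(?P - m)" using refl_w Pn by simp
    finally show "rot z ! m = w!(?P - m)" .
  qed
  have wz: "w!z = L!j" using refl_w[OF Pn] w_pp j by (simp add: z_def)
  have nxz: "nx z = (tt + n - ?P) mod n"
  proof -
    have "nx z = (z + 1) mod n" by (simp add: nx_def)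
    also have "\<dots> = (tt + 2*n - 1 - ?P + 1) mod n" by (simp add: z_def mod_Suc_eq)
    also have "tt + 2*n - 1 - ?P + 1 = (tt + n - ?P) + n" using Pn by simp
    finally show ?thesis by simp
  qed
  have "rk (nx z) = n - 1 - lt (L!j)" using refl_rk[OF Pn] nxz rk_pp j by simp
  moreover have "rk (nx z) + lt (L!j) = rk z + gt (L!j)" using F4[OF zn] wz by simp
  moreover have "lt (L!j) < n" using lt_lt_n j by simp
  ultimately have rz: "rk z + 1 = lt (L!j) + cn (L!j)" using cnt_sum[of "L!j"] by linarith
  have "rot z < rot s"
  proof -
    have Dn: "D < n" using D by simp
    have "\<forall>m<D. rot z ! m = rot s ! m"
    proof (intro allI impI)
      fix m assume m: "m < D"
      have "rot z ! m = w!(?P - m)" using rotz m D by simp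
      also have "\<dots> = w!(s + m)" using eq m by simp
      also have "\<dots> = rot s ! m" using rot_nth[of m s] m D by simp
      finally show "rot z ! m = rot s ! m" .
    qed
    moreover have "rot z ! D < rot s ! D" using rotz[of D] D lt rot_nth[of D s] by simp
    ultimately show ?thesis using lex_less_eq_len[of "rot z" "rot s"] Dn by auto
  qed
  then have "rk z < rk s" using rk_less_iff zn s by simp
  moreover have "rk s < lt (L!j) + cn (L!j)" using F2(2)[OF s(1)] s by simp
  ultimately show False using rz by linarith
qed

lemma zmin:
  assumes j: "j < k" and s: "s < n" "w!s = L!j" and D: "pp j + D < n" "s + D < n"
    and eq: "\<forall>m<D. w!(s+m) = w!(pp j + m)" and lt: "w!(s + D) < w!(pp j + D)"
  shows False
proof -
  let ?P = "pp j"
  have Pn: "?P < n" using pp_lt j by simp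
  have "rot s < rot ?P"
  proof -
    have Dn: "D < n" using D by simp
    have "\<forall>m<D. rot s ! m = rot ?P ! m" using eq rot_nth D by simp
    moreover have "rot s ! D < rot ?P ! D" using lt rot_nth D by simp
    ultimately show ?thesis using lex_less_eq_len[of "rot s" "rot ?P"] Dn by auto
  qed
  then have "rk s < rk ?P" using rk_less_iff Pn s by simp
  moreover have "lt (L!j) \<le> rk s" using F2(1)[OF s(1)] s by simp
  ultimately show False using rk_pp j by simp
qed

lemma canon_pal: assumes si: "Suc i < k" and m: "0 < m" "m < pp (Suc i) - pp i"
  shows "w!(pp i + m) = w!(pp (Suc i) - m)"
proof -
  have "pp i + 1 + (m - 1) < pp (Suc i)" using m by simp
  then have "w ! (pp (Suc i) - (m - 1) - 1) = w ! (pp i + 1 + (m - 1))" using palin[OF si] by blast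
  moreover have "pp (Suc i) - (m - 1) - 1 = pp (Suc i) - m" "pp i + 1 + (m - 1) = pp i + m" using m by auto
  ultimately show ?thesis by simp
qed

lemma lemA:
  assumes si: "Suc i < k" and T: "T2 < n" "T1 \<le> pp i" "pp (Suc i) \<le> T2"
    "w!T1 = L!i" "w!T2 = L!Suc i"
    and pal: "\<And>m. 0 < m \<Longrightarrow> m < T2 - T1 \<Longrightarrow> w!(T1 + m) = w!(T2 - m)"
  shows "T1 = pp i \<and> T2 = pp (Suc i)"
proof -
  let ?P1 = "pp i" and ?P2 = "pp (Suc i)"
  have ik: "i < k" using si by simp
  have P12: "?P1 < ?P2" using pp_step si by simp
  have P2n: "?P2 < n" using pp_lt si by simp
  have wP1: "w!?P1 = L!i" using w_pp ik by simp
  have wP2: "w!?P2 = L!Suc i" using w_pp si by simp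
  have ab: "L!i < L!Suc i" using L_less_iff si by simp
  have cpal: "\<And>m. 0 < m \<Longrightarrow> m < ?P2 - ?P1 \<Longrightarrow> w!(?P1 + m) = w!(?P2 - m)"
    using canon_pal[OF si] by blast
  show ?thesis
  proof (cases "T1 < ?P1")
    case True
    note T1P1 = True
    show ?thesis
    proof (cases "T2 = ?P2")
      case True
      define D where "D = ?P2 - ?P1"
      have "\<forall>m<D. w!(T1+m) = w!(?P1 + m)"
      proof (intro allI impI)
        fix m assume m: "m < D"
        show "w!(T1+m) = w!(?P1 + m)"
        proof (cases "m = 0")
          case True then show ?thesis using T wP1 by simp
        next
          case False
          have "w!(T1+m) = w!(T2 - m)" using pal[of m] False m T1P1 True D_def by simp
          also have "\<dots> = w!(?P1 + m)" using cpal False m True D_def by simp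
          finally show ?thesis .
        qed
      qed
      moreover have "w!(T1 + D) < w!(?P1 + D)"
      proof -
        have "w!(T1 + D) = w!(T2 - D)" using pal[of D] P12 T1P1 True D_def by simp
        also have "T2 - D = ?P1" using True P12 D_def by simp
        finally have "w!(T1 + D) = L!i" using wP1 by simp
        moreover have "?P1 + D = ?P2" using P12 D_def by simp
        ultimately show ?thesis using wP2 ab by simp
      qed
      moreover have "T1 < n" "?P1 + D < n" "T1 + D < n" using T1P1 P12 P2n D_def by auto
      ultimately have False using zmin[OF ik, of T1 D] T by simp
      then show ?thesis ..
    next
      case False
      then have T2P2: "?P2 < T2" using T by simp
      define s where "s = T1 + (T2 - ?P1)"
      define D where "D = ?P1 - T1"
      have ws: "w!s = L!i"
      proof -
        have "w!s = w!(T2 - (T2 - ?P1))" using pal[of "T2 - ?P1"] T1P1 P12 T2P2 by (simp add: s_def)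
        then show ?thesis using wP1 T2P2 P12 by simp
      qed
      have "\<forall>m<D. w!(s+m) = w!(?P1 - m)"
      proof (intro allI impI)
        fix m assume m: "m < D"
        have "w!(s+m) = w!(T1 + (T2 - ?P1 + m))" by (simp add: s_def add.assoc)
        also have "\<dots> = w!(T2 - (T2 - ?P1 + m))" using pal[of "T2 - ?P1 + m"] m T1P1 P12 T2P2 D_def by simp
        also have "T2 - (T2 - ?P1 + m) = ?P1 - m" using m P12 T2P2 D_def by simp
        finally show "w!(s+m) = w!(?P1 - m)" .
      qed
      moreover have "w!(?P1 - D) < w!(s + D)"
      proof -
        have "?P1 - D = T1" using T1P1 D_def by simp
        moreover have "s + D = T2" using T1P1 P12 T2P2 by (simp add: s_def D_def)
        ultimately show ?thesis using T ab by simp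
      qed
      moreover have "s < n" "D \<le> ?P1" "s + D < n" using T1P1 P12 T2P2 T by (auto simp: s_def D_def)
      ultimately have False using zmax[OF ik, of s D] ws by simp
      then show ?thesis ..
    qed
  next
    case False
    then have T1P1: "T1 = ?P1" using T by simp
    show ?thesis
    proof (cases "T2 = ?P2")
      case True then show ?thesis using T1P1 by simp
    next
      case False
      then have T2P2: "?P2 < T2" using T by simp
      define s where "s = T1 + (T2 - ?P2)"
      define D where "D = ?P2 - ?P1"
      have ws: "w!s = L!Suc i"
      proof -
        have "w!s = w!(T2 - (T2 - ?P2))" using pal[of "T2 - ?P2"] T1P1 P12 T2P2 by (simp add: s_def)
        then show ?thesis using wP2 T2P2 by simp
      qed
      have "\<forall>m<D. w!(s+m) = w!(?P2 - m)"
      proof (intro allI impI)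
        fix m assume m: "m < D"
        have "w!(s+m) = w!(T1 + (T2 - ?P2 + m))" by (simp add: s_def add.assoc)
        also have "\<dots> = w!(T2 - (T2 - ?P2 + m))" using pal[of "T2 - ?P2 + m"] m T1P1 P12 T2P2 D_def by simp
        also have "T2 - (T2 - ?P2 + m) = ?P2 - m" using m P12 T2P2 D_def by simp
        finally show "w!(s+m) = w!(?P2 - m)" .
      qed
      moreover have "w!(?P2 - D) < w!(s + D)"
      proof -
        have "?P2 - D = ?P1" using P12 D_def by simp
        moreover have "s + D = T2" using T1P1 P12 T2P2 by (simp add: s_def D_def)
        ultimately show ?thesis using T wP1 ab by simp
      qed
      moreover have "s < n" "D \<le> ?P2" "s + D < n" using T1P1 P12 T2P2 T by (auto simp: s_def D_def)
      ultimately have False using zmax[OF si, of s D] ws by simp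
      then show ?thesis ..
    qed
  qed
qed

end


lemma sw_Cons_hd: "\<exists>r. sw (a # as) ps = a # r"
  by (cases as; cases ps) auto

context pcl
begin

definition tps :: "'a list list \<Rightarrow> nat \<Rightarrow> nat" where
  "tps ps i = i + sum_list (map length (take i ps))"

lemma tps_Suc: "i < length ps \<Longrightarrow> tps ps (Suc i) = tps ps i + 1 + length (ps!i)"
  by (simp add: tps_def take_Suc_conv_app_nth)

lemma pos_fact: assumes len: "length ps + 1 = k" and ws: "w = sw L ps"
  shows "i < k \<Longrightarrow> drop (tps ps i) w = sw (drop i L) (drop i ps)"
proof (induction i)
  case 0
  then show ?case using ws by (simp add: tps_def)
next
  case (Suc i)
  then have si: "Suc i < k" and il: "i < length ps" using len by auto
  have IH: "drop (tps ps i) w = sw (drop i L) (drop i ps)" using Suc by simp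
  have dps: "drop i ps = ps!i # drop (Suc i) ps" using il by (intro Cons_nth_drop_Suc[symmetric])
  have dL: "drop (Suc i) L = L!Suc i # drop (Suc (Suc i)) L" using si by (intro Cons_nth_drop_Suc[symmetric])
  have "sw (drop i L) (drop i ps) = L!i # ps!i @ sw (drop (Suc i) L) (drop (Suc i) ps)"
    using drop_L_step[OF si] dps dL by simp
  then have "drop (tps ps i) w = L!i # ps!i @ sw (drop (Suc i) L) (drop (Suc i) ps)" using IH by simp
  then have "drop (1 + length (ps!i)) (drop (tps ps i) w) = sw (drop (Suc i) L) (drop (Suc i) ps)" by simp
  then show ?case using tps_Suc[OF il] by (simp add: add.commute add.left_commute)
qed

lemma pos_facts:
  assumes psf: "palindromic_special_factorization w ps"
  shows "\<And>i. i < k \<Longrightarrow> tps ps i < n \<and> w ! tps ps i = L!i"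
    and "tps ps (k-1) = n - 1"
    and "\<And>i m. Suc i < k \<Longrightarrow> m < length (ps!i) \<Longrightarrow> w ! (Suc (tps ps i) + m) = ps!i!m"
    and "\<And>i. Suc i < k \<Longrightarrow> tps ps (Suc i) = tps ps i + 1 + length (ps!i)"
    and "\<And>i. Suc i < k \<Longrightarrow> ps!i = take (length (ps!i)) (drop (Suc (tps ps i)) w)"
    and "length ps = k - 1"
proof -
  have len: "length ps + 1 = k" and ws: "w = sw L ps" and pal: "\<forall>p\<in>set ps. rev p = p"
    using psf unfolding palindromic_special_factorization_def special_factorization_def by auto
  note pf = pos_fact[OF len ws]
  show "length ps = k - 1" using len by simp
  show A: "\<And>i. i < k \<Longrightarrow> tps ps i < n \<and> w ! tps ps i = L!i"
  proof -
    fix i assume i: "i < k"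
    have "drop i L = L!i # drop (Suc i) L" using i by (intro Cons_nth_drop_Suc[symmetric])
    moreover obtain r where "sw (L!i # drop (Suc i) L) (drop i ps) = L!i # r" using sw_Cons_hd[of "L!i" "drop (Suc i) L" "drop i ps"] by (elim exE) blast
    ultimately have r: "drop (tps ps i) w = L!i # r" using pf[OF i] by simp
    have "tps ps i < n"
    proof (rule ccontr)
      assume "\<not> tps ps i < n" then have "drop (tps ps i) w = []" by simp
      then show False using r by simp
    qed
    moreover have "w ! tps ps i = L!i"
    proof -
      have "hd (drop (tps ps i) w) = w ! tps ps i" using calculation by (simp add: hd_drop_conv_nth)
      then show ?thesis using r by simp
    qed
    ultimately show "tps ps i < n \<and> w ! tps ps i = L!i" by simp
  qed
  show "tps ps (k-1) = n - 1"
  proof -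
    have "drop (tps ps (k-1)) w = sw (drop (k-1) L) (drop (k-1) ps)" using pf k_pos by simp
    also have "\<dots> = [L!(k-1)]" using drop_L_last by simp
    finally have "length (drop (tps ps (k-1)) w) = 1" by simp
    then show ?thesis by simp
  qed
  show TS: "\<And>i. Suc i < k \<Longrightarrow> tps ps (Suc i) = tps ps i + 1 + length (ps!i)"
    using tps_Suc len by simp
  have D: "\<And>i. Suc i < k \<Longrightarrow> drop (Suc (tps ps i)) w = ps!i @ drop (tps ps (Suc i)) w"
  proof -
    fix i assume si: "Suc i < k"
    then have il: "i < length ps" using len by simp
    have dps: "drop i ps = ps!i # drop (Suc i) ps" using il by (intro Cons_nth_drop_Suc[symmetric])
    have dL: "drop (Suc i) L = L!Suc i # drop (Suc (Suc i)) L" using si by (intro Cons_nth_drop_Suc[symmetric])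
    have "drop (tps ps i) w = L!i # ps!i @ sw (drop (Suc i) L) (drop (Suc i) ps)"
      using pf[of i] si drop_L_step[OF si] dps dL by simp
    then have "drop 1 (drop (tps ps i) w) = ps!i @ sw (drop (Suc i) L) (drop (Suc i) ps)" by simp
    then have "drop (Suc (tps ps i)) w = ps!i @ sw (drop (Suc i) L) (drop (Suc i) ps)" by simp
    then show "drop (Suc (tps ps i)) w = ps!i @ drop (tps ps (Suc i)) w" using pf[OF si] by simp
  qed
  show "\<And>i m. Suc i < k \<Longrightarrow> m < length (ps!i) \<Longrightarrow> w ! (Suc (tps ps i) + m) = ps!i!m"
  proof -
    fix i m assume si: "Suc i < k" and m: "m < length (ps!i)"
    have "tps ps (Suc i) < n" using A si by blast
    then have "Suc (tps ps i) + m < n" using TS[OF si] m by simp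
    then have "w ! (Suc (tps ps i) + m) = drop (Suc (tps ps i)) w ! m" by simp
    also have "\<dots> = ps!i!m" using D[OF si] m by (simp add: nth_append)
    finally show "w ! (Suc (tps ps i) + m) = ps!i!m" .
  qed
  show "\<And>i. Suc i < k \<Longrightarrow> ps!i = take (length (ps!i)) (drop (Suc (tps ps i)) w)"
    using D by simp
qed

lemma seg_pal: assumes psf: "palindromic_special_factorization w ps" and si: "Suc i < k"
  and m: "0 < m" "m < tps ps (Suc i) - tps ps i"
  shows "w!(tps ps i + m) = w!(tps ps (Suc i) - m)"
proof -
  have pal: "\<forall>p\<in>set ps. rev p = p"
    using psf unfolding palindromic_special_factorization_def by auto
  have il: "i < length ps" using pos_facts(6)[OF psf] si by simp
  then have rp: "rev (ps!i) = ps!i" using pal by simp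
  let ?l = "length (ps!i)"
  have ts: "tps ps (Suc i) = tps ps i + 1 + ?l" using pos_facts(4)[OF psf si] .
  have m1: "m - 1 < ?l" using m ts by simp
  have "w!(tps ps i + m) = w!(Suc (tps ps i) + (m - 1))" using m by simp
  also have "\<dots> = ps!i!(m-1)" using pos_facts(3)[OF psf si m1] .
  also have "\<dots> = rev (ps!i) ! (m - 1)" using rp by simp
  also have "\<dots> = ps!i ! (?l - m)" using m1 m by (simp add: rev_nth)
  also have "\<dots> = w!(Suc (tps ps i) + (?l - m))"
  proof -
    have "?l - m < ?l" using m m1 by simp
    then show ?thesis using pos_facts(3)[OF psf si, of "?l - m"] by simp
  qed
  also have "Suc (tps ps i) + (?l - m) = tps ps (Suc i) - m" using ts m1 by simp
  finally show ?thesis .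
qed

lemma uniq: assumes psf: "palindromic_special_factorization w ps" shows "ps = cps"
proof -
  note pf = pos_facts[OF psf]
  have lA: "\<And>i. Suc i < k \<Longrightarrow> tps ps i \<le> pp i \<Longrightarrow> pp (Suc i) \<le> tps ps (Suc i) \<Longrightarrow>
      tps ps i = pp i \<and> tps ps (Suc i) = pp (Suc i)"
  proof -
    fix i assume si: "Suc i < k" and a: "tps ps i \<le> pp i" "pp (Suc i) \<le> tps ps (Suc i)"
    have t1: "tps ps (Suc i) < n" "w ! tps ps (Suc i) = L ! Suc i" using pf(1)[of "Suc i"] si by auto
    have t2: "w ! tps ps i = L ! i" using pf(1)[of i] si by auto
    show "tps ps i = pp i \<and> tps ps (Suc i) = pp (Suc i)"
      by (rule lemA[OF si t1(1) a(1) a(2) t2 t1(2) seg_pal[OF psf si]])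
  qed
  have down: "\<And>d. d < k \<Longrightarrow> pp (k - 1 - d) \<le> tps ps (k - 1 - d)"
  proof -
    fix d show "d < k \<Longrightarrow> pp (k - 1 - d) \<le> tps ps (k - 1 - d)"
    proof (induction d)
      case 0 then show ?case using pf(2) ppk by simp
    next
      case (Suc d)
      define i where "i = k - 1 - Suc d"
      have si: "Suc i < k" and e: "Suc i = k - 1 - d" using Suc.prems by (auto simp: i_def)
      have IH: "pp (Suc i) \<le> tps ps (Suc i)" using Suc e by simp
      show ?case
      proof (rule ccontr)
        assume "\<not> pp (k - 1 - Suc d) \<le> tps ps (k - 1 - Suc d)"
        then have "tps ps i < pp i" by (simp add: i_def)
        then show False using lA[OF si] IH by simp
      qed
    qed
  qed
  have ge: "\<And>i. i < k \<Longrightarrow> pp i \<le> tps ps i"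
  proof -
    fix i assume i: "i < k"
    have "k - 1 - (k - 1 - i) = i" using i by simp
    then show "pp i \<le> tps ps i" using down[of "k - 1 - i"] i by simp
  qed
  have le: "\<And>i. i < k \<Longrightarrow> tps ps i \<le> pp i"
  proof -
    fix i show "i < k \<Longrightarrow> tps ps i \<le> pp i"
    proof (induction i)
      case 0 then show ?case using pp0 by (simp add: tps_def)
    next
      case (Suc i)
      then have si: "Suc i < k" by simp
      have IH: "tps ps i \<le> pp i" using Suc by simp
      show ?case
      proof (rule ccontr)
        assume "\<not> tps ps (Suc i) \<le> pp (Suc i)"
        then show False using lA[OF si IH] by simp
      qed
    qed
  qed
  have eq: "\<And>i. i < k \<Longrightarrow> tps ps i = pp i" using ge le by (simp add: le_antisym)
  show ?thesis
  proof (rule nth_equalityI)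
    show "length ps = length cps" using pf(6) cps_len by simp
    fix i assume "i < length ps"
    then have si: "Suc i < k" using pf(6) by simp
    have "ps!i = take (length (ps!i)) (drop (Suc (tps ps i)) w)" using pf(5)[OF si] .
    moreover have "length (ps!i) = pp (Suc i) - pp i - 1" using pf(4)[OF si] eq si by simp
    ultimately show "ps!i = cps!i" using cps_nth[OF si] eq si by simp
  qed
qed

lemma final_i: assumes i: "i < k"
  shows "\<exists>x. w = x @ drop (pp i) w \<and>
      drop (pp i) w \<in> {t. \<exists>y. w = y @ t \<and> t \<noteq> [] \<and> hd t = L!i} \<and>
      (\<forall>t \<in> {t. \<exists>y. w = y @ t \<and> t \<noteq> [] \<and> hd t = L!i}. drop (pp i) w \<le> t) \<and>
      drop (pp i) w @ x \<in> {c \<in> conjugates w. c \<noteq> [] \<and> hd c = L!i} \<and>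
      (\<forall>c \<in> {c \<in> conjugates w. c \<noteq> [] \<and> hd c = L!i}. drop (pp i) w @ x \<le> c)"
proof (intro exI conjI)
  let ?P = "pp i" and ?s = "drop (pp i) w" and ?x = "take (pp i) w"
  have Pn: "?P < n" using pp_lt i by simp
  have wP: "w!?P = L!i" using w_pp i by simp
  have rP: "rk ?P = lt (L!i)" using rk_pp i by simp
  have minq: "\<And>q. q < n \<Longrightarrow> w!q = L!i \<Longrightarrow> rot ?P \<le> rot q"
  proof -
    fix q assume q: "q < n" "w!q = L!i"
    have "lt (L!i) \<le> rk q" using F2(1)[OF q(1)] q by simp
    then show "rot ?P \<le> rot q" using rk_le_iff[OF Pn q(1)] rP by simp
  qed
  show "w = ?x @ ?s" by simp
  show "?s \<in> {t. \<exists>y. w = y @ t \<and> t \<noteq> [] \<and> hd t = L!i}"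
  proof -
    have "?s \<noteq> []" using Pn by simp
    moreover have "hd ?s = L!i" using Pn wP by (simp add: hd_drop_conv_nth)
    moreover have "w = ?x @ ?s" by simp
    ultimately show ?thesis by blast
  qed
  show "\<forall>t \<in> {t. \<exists>y. w = y @ t \<and> t \<noteq> [] \<and> hd t = L!i}. ?s \<le> t"
  proof
    fix t assume "t \<in> {t. \<exists>y. w = y @ t \<and> t \<noteq> [] \<and> hd t = L!i}"
    then obtain y where y: "w = y @ t" "t \<noteq> []" "hd t = L!i" by auto
    let ?q = "length y"
    have td: "t = drop ?q w" using y by simp
    have qn: "?q < n"
    proof (rule ccontr)
      assume "\<not> ?q < n" then have "drop ?q w = []" by simp
      then show False using td y(2) by simp
    qed
    have "hd (drop ?q w) = w ! ?q" using qn by (simp add: hd_drop_conv_nth)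
    then have wq: "w!?q = L!i" using y(3) td by simp
    show "?s \<le> t"
    proof (cases "?q = ?P")
      case True then show ?thesis using td by simp
    next
      case False
      have "rot ?P \<le> rot ?q" using minq qn wq by simp
      moreover have "rot ?P \<noteq> rot ?q"
      proof
        assume "rot ?P = rot ?q" then have "?P = ?q" using rot_inj[OF Pn qn] by simp
        then show False using False by simp
      qed
      ultimately have lt: "rot ?P < rot ?q" by simp
      show ?thesis using suffix_order[OF Pn qn lt] td by simp
    qed
  qed
  have rPe: "?s @ ?x = rot ?P" using rot_drop_take Pn by simp
  show "?s @ ?x \<in> {c \<in> conjugates w. c \<noteq> [] \<and> hd c = L!i}"
  proof -
    have "length (rot ?P) = n" by simp
    then have "rot ?P \<noteq> []" using n_pos by (intro notI) simp
    moreover have "hd (rot ?P) = L!i"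
    proof -
      have "hd (rot ?P) = rot ?P ! 0" using \<open>rot ?P \<noteq> []\<close> by (rule hd_conv_nth)
      then show ?thesis using hd_rot[OF Pn] wP by simp
    qed
    moreover have "rot ?P \<in> conjugates w" using rot_in_conj[OF Pn] .
    ultimately show ?thesis unfolding rPe by blast
  qed
  show "\<forall>c \<in> {c \<in> conjugates w. c \<noteq> [] \<and> hd c = L!i}. ?s @ ?x \<le> c"
  proof
    fix c assume "c \<in> {c \<in> conjugates w. c \<noteq> [] \<and> hd c = L!i}"
    then have c: "c \<in> conjugates w" "c \<noteq> []" "hd c = L!i" by auto
    then obtain q where q: "q < n" "c = rot q" using conj_eq by auto
    have "hd c = c ! 0" using c(2) by (rule hd_conv_nth)
    then have "w!q = L!i" using c(3) q hd_rot[OF q(1)] by simp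
    then have "rot ?P \<le> rot q" using minq q(1) by simp
    then show "?s @ ?x \<le> c" using q(2) rPe by simp
  qed
qed

end

theorem corollary6p1:
  fixes w :: "'a::linorder list"
  assumes "lyndon w" and "perfectly_clustering w"
  shows "(\<exists>!ps. palindromic_special_factorization w ps) \<and>
         (\<forall>ps. palindromic_special_factorization w ps \<longrightarrow>
            (\<forall>i < length (letters w).
               let a = letters w ! i;
                   s = sw (drop i (letters w)) (drop i ps)
               in \<exists>x. w = x @ s \<and>
                  s \<in> {t. \<exists>y. w = y @ t \<and> t \<noteq> [] \<and> hd t = a} \<and>
                  (\<forall>t \<in> {t. \<exists>y. w = y @ t \<and> t \<noteq> [] \<and> hd t = a}. s \<le> t) \<and>
                  s @ x \<in> {c \<in> conjugates w. c \<noteq> [] \<and> hd c = a} \<and>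
                  (\<forall>c \<in> {c \<in> conjugates w. c \<noteq> [] \<and> hd c = a}. s @ x \<le> c)))"
proof -
  interpret pcl w using assms by unfold_locales
  show ?thesis
  proof (intro conjI allI impI)
    show "\<exists>!ps. palindromic_special_factorization w ps" using cps_psf uniq by blast
  next
    fix ps i assume ps: "palindromic_special_factorization w ps" and i: "i < length (letters w)"
    have "ps = cps" using uniq ps by simp
    then have s: "sw (drop i (letters w)) (drop i ps) = drop (pp i) w" using sw_cps i by simp
    show "let a = letters w ! i;
                   s = sw (drop i (letters w)) (drop i ps)
               in \<exists>x. w = x @ s \<and>
                  s \<in> {t. \<exists>y. w = y @ t \<and> t \<noteq> [] \<and> hd t = a} \<and>
                  (\<forall>t \<in> {t. \<exists>y. w = y @ t \<and> t \<noteq> [] \<and> hd t = a}. s \<le> t) \<and>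
                  s @ x \<in> {c \<in> conjugates w. c \<noteq> [] \<and> hd c = a} \<and>
                  (\<forall>c \<in> {c \<in> conjugates w. c \<noteq> [] \<and> hd c = a}. s @ x \<le> c)"
      unfolding Let_def s using final_i[OF i] by simp
  qed
qed


end
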